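(* Fix a round $r$. For clients $i=1,\dots,N$ let $(Z_i,E_i,X_{i,r},A_{i,r},\Delta_{i,r})$ be random, mutually independent across $i$, with $E_i,A_{i,r}\in\{0,1\}$, $A_{i,r}=0$ when $E_i=0$, and $\Delta_{i,r}\in\mathbb R^m$. Let $\mathcal E:=\{i:E_i=1\}$, $\pi_{i,r}^{\mathrm{part}}:=P(A_{i,r}=1\mid E_i=1,Z_i,X_{i,r})$, let $b$ be a map into $\mathbb R^q$ with $E[b(Z_i)]=\mu_b$ for all $i$ ($\mu_b$ known), and let $\bar\Delta_r:=\frac1N\sum_iE[\Delta_{i,r}]$. Let $q_i\ge0$, $i\in\mathcal E$, be weights that are measurable functions of $(E_j,Z_j)_{j=1}^N$ and satisfy $\sum_{i\in\mathcal E}q_i=1$ and $\sum_{i\in\mathcal E}q_ib(Z_i)=\mu_b$ (feasible because $\mu_b$ is assumed to lie in the convex hull of $\{b(Z_i):i\in\mathcal E\}$). Let $(\hat\pi_{i,r}^{\mathrm{part},(n)})_{n\ge1}$ be a sequence of participation-propensity estimators, and define \[ \hat{\bar\Delta}_r^{\mathrm{cal},(n)}:=\sum_{i:A_{i,r}=1}q_i\frac{\Delta_{i,r}}{\hat\pi_{i,r}^{\mathrm{part},(n)}}. \] Assume: (participation ignorability) $E[\Delta_{i,r}\mid Z_i,X_{i,r},E_i=1,A_{i,r}=1]=E[\Delta_{i,r}\mid Z_i,X_{i,r},E_i=1]$; (enrollment ignorability) $E[\Delta_{i,r}\mid Z_i,E_i=1]=E[\Delta_{i,r}\mid Z_i]$;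 (moment sufficiency) there is a matrix $B_r$ with $E[\Delta_{i,r}\mid Z_i]=B_rb(Z_i)$; (overlap and consistency) there is $c_r>0$ with $\pi_{i,r}^{\mathrm{part}}\ge c_r$ and $\hat\pi_{i,r}^{\mathrm{part},(n)}\in[c_r,1]$ for all enrolled $i$ and all $n$, and $E[\max_{i:E_i=1}|\hat\pi_{i,r}^{\mathrm{part},(n)}-\pi_{i,r}^{\mathrm{part}}|]\to0$; (bounded moment) $E[(\sum_{i:A_{i,r}=1}q_i\|\Delta_{i,r}\|_2)^2]<\infty$. Then \[ E[\hat{\bar\Delta}_r^{\mathrm{cal},(n)}]-\bar\Delta_r\to0\quad(n\to\infty). \]
   Context: $Z_i$: pre-enrollment covariates; $X_{i,r}$: pre-round covariates; $E_i$: enrollment indicator; $A_{i,r}$: round-$r$ inclusion indicator; $\Delta_{i,r}$: client update. This is the limited-information regime in which only enrolled clients' covariates plus the population moment $\mu_b$ are known. *)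

theory Defs
  imports "HOL-Probability.Probability"
begin

definition gen_sigma :: "'a measure \<Rightarrow> ('a \<Rightarrow> 'b) \<Rightarrow> 'b measure \<Rightarrow> 'a measure" where
  "gen_sigma M f N = vimage_algebra (space M) f N"

definition vec_cond_exp :: "'a measure \<Rightarrow> 'a measure \<Rightarrow> ('a \<Rightarrow> real^'m) \<Rightarrow> 'a \<Rightarrow> real^'m" where
  "vec_cond_exp M F f = (\<lambda>w. \<chi> k. real_cond_exp M F (\<lambda>v. f v $ k) w)"

text \<open>Participation propensity P(A_i = 1 | Z_i, X_i, E_i); on the event E_i = 1 this is
  P(A_i = 1 | E_i = 1, Z_i, X_i).\<close>
definition pi_part :: "'a measure \<Rightarrow> 'z measure \<Rightarrow> 'x measure \<Rightarrow>
    (nat \<Rightarrow> 'a \<Rightarrow> 'z) \<Rightarrow> (nat \<Rightarrow> 'a \<Rightarrow> 'x) \<Rightarrow> (nat \<Rightarrow> 'a \<Rightarrow> real) \<Rightarrow> (nat \<Rightarrow> 'a \<Rightarrow> real)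
    \<Rightarrow> nat \<Rightarrow> 'a \<Rightarrow> real" where
  "pi_part M SZ SX Z X E A i =
     real_cond_exp M (gen_sigma M (\<lambda>w. (Z i w, X i w, E i w)) (SZ \<Otimes>\<^sub>M SX \<Otimes>\<^sub>M borel))
       (\<lambda>w. if A i w = 1 then 1 else 0)"

definition cal_est :: "nat \<Rightarrow> (nat \<Rightarrow> 'a \<Rightarrow> real) \<Rightarrow> (nat \<Rightarrow> 'a \<Rightarrow> real) \<Rightarrow> (nat \<Rightarrow> 'a \<Rightarrow> real)
    \<Rightarrow> (nat \<Rightarrow> 'a \<Rightarrow> real^'m) \<Rightarrow> 'a \<Rightarrow> real^'m" where
  "cal_est N A q pihat \<Delta> w =
     (\<Sum>i\<in>{i\<in>{1..N}. A i w = 1}. (q i w / pihat i w) *\<^sub>R \<Delta> i w)"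

end

theory Submission
  imports Defs
begin

lemma (in prob_space) indep_var_vimage:
  assumes ind: "indep_var SU U SV V"
   and f: "f \<in> measurable (vimage_algebra (space M) U SU) N1"
   and g: "g \<in> measurable (vimage_algebra (space M) V SV) N2"
  shows "indep_var N1 f N2 g"
proof -
  have U: "U \<in> measurable M SU" using ind by (rule indep_var_rv1)
  have V: "V \<in> measurable M SV" using ind by (rule indep_var_rv2)
  have sU: "sets (vimage_algebra (space M) U SU) \<subseteq> sets M" by (rule sets_image_in_sets[OF refl U])
  have sV: "sets (vimage_algebra (space M) V SV) \<subseteq> sets M" by (rule sets_image_in_sets[OF refl V])
  have fM: "f \<in> measurable M N1" using measurable_mono[OF order_refl refl sU] f by auto
  have gM: "g \<in> measurable M N2" using measurable_mono[OF order_refl refl sV] g by auto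
  have I: "indep_sets (\<lambda>i. sigma_sets (space M) {case_bool U V i -` A \<inter> space M |A. A \<in> sets (case_bool SU SV i)}) UNIV"
    using ind unfolding indep_var_def indep_vars_def by auto
  show ?thesis unfolding indep_var_def indep_vars_def
  proof (intro conjI)
    show "\<forall>i\<in>UNIV. random_variable (case_bool N1 N2 i) (case_bool f g i)"
      using fM gM by (auto split: bool.split)
    show "indep_sets (\<lambda>i. sigma_sets (space M) {case_bool f g i -` A \<inter> space M |A. A \<in> sets (case_bool N1 N2 i)}) UNIV"
    proof (rule indep_sets_mono_sets[OF I])
      fix i :: bool
      show "sigma_sets (space M) {case_bool f g i -` A \<inter> space M |A. A \<in> sets (case_bool N1 N2 i)}
         \<subseteq> sigma_sets (space M) {case_bool U V i -` A \<inter> space M |A. A \<in> sets (case_bool SU SV i)}"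
      proof (cases i)
        case True
        have "{f -` A \<inter> space M |A. A \<in> sets N1} \<subseteq> sigma_sets (space M) {U -` A \<inter> space M |A. A \<in> sets SU}"
          using measurable_sets[OF f] by (auto simp: sets_vimage_algebra)
        then show ?thesis using True by (auto intro!: sigma_sets_mono)
      next
        case False
        have "{g -` A \<inter> space M |A. A \<in> sets N2} \<subseteq> sigma_sets (space M) {V -` A \<inter> space M |A. A \<in> sets SV}"
          using measurable_sets[OF g] by (auto simp: sets_vimage_algebra)
        then show ?thesis using False by (auto intro!: sigma_sets_mono)
      qed
    qed
  qed
qed



lemma set_integral_compl_space:
  fixes f :: "'a \<Rightarrow> real"
  assumes "integrable M f" "A \<in> sets M"
  shows "(\<integral>x\<in>space M - A. f x \<partial>M) = (\<integral>x. f x \<partial>M) - (\<integral>x\<in>A. f x \<partial>M)"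
proof -
  have "(\<integral>x\<in>space M - A. f x \<partial>M) = (\<integral>x. f x - indicator A x * f x \<partial>M)"
    unfolding set_lebesgue_integral_def
    by (intro Bochner_Integration.integral_cong refl) (auto simp: indicator_def)
  also have "\<dots> = (\<integral>x. f x \<partial>M) - (\<integral>x. indicator A x * f x \<partial>M)"
    using integrable_mult_indicator[OF assms(2,1)] assms(1) by (subst Bochner_Integration.integral_diff) auto
  finally show ?thesis by (simp add: set_lebesgue_integral_def)
qed

lemma (in prob_space) cond_exp_indep_sets:
  fixes Y :: "'a \<Rightarrow> real"
  assumes ind: "indep_var SU U SV V"
    and F: "sets F \<subseteq> sets (vimage_algebra (space M) U SU)" "space F = space M"
    and Y: "Y \<in> borel_measurable (vimage_algebra (space M) U SU)" "integrable M Y"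
  shows "AE w in M. real_cond_exp M (sigma (space M) {a \<inter> b | a b. a \<in> sets F \<and> b \<in> sets (vimage_algebra (space M) V SV)}) Y w
           = real_cond_exp M F Y w"
proof -
  define VA where "VA = vimage_algebra (space M) V SV"
  define Gen where "Gen = {a \<inter> b | a b. a \<in> sets F \<and> b \<in> sets VA}"
  define G where "G = sigma (space M) Gen"
  have U: "U \<in> measurable M SU" using ind by (rule indep_var_rv1)
  have V: "V \<in> measurable M SV" using ind by (rule indep_var_rv2)
  have sU: "sets (vimage_algebra (space M) U SU) \<subseteq> sets M" by (rule sets_image_in_sets[OF refl U])
  have sV: "sets VA \<subseteq> sets M" unfolding VA_def by (rule sets_image_in_sets[OF refl V])
  have sF: "sets F \<subseteq> sets M" using F sU by auto
  have Gen_sub: "Gen \<subseteq> sets M" unfolding Gen_def using sF sV by auto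
  have Gen_Pow: "Gen \<subseteq> Pow (space M)" using Gen_sub sets.sets_into_space by auto
  have sG: "sets G = sigma_sets (space M) Gen" unfolding G_def by (rule sets_measure_of[OF Gen_Pow])
  have spG: "space G = space M" unfolding G_def by (rule space_measure_of[OF Gen_Pow])
  have sGM: "sets G \<subseteq> sets M" unfolding sG by (rule sets.sigma_sets_subset[OF Gen_sub])
  have OmVA: "space M \<in> sets VA" unfolding VA_def by (rule sets_vimage_algebra_space)
  have FG: "sets F \<subseteq> sets G"
  proof
    fix a assume a: "a \<in> sets F"
    then have "a \<inter> space M \<in> Gen" unfolding Gen_def using OmVA by blast
    moreover have "a \<inter> space M = a" using a F(2) sets.sets_into_space by blast
    ultimately show "a \<in> sets G" unfolding sG by auto
  qed
  interpret FS: finite_measure_subalgebra M F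
    by unfold_locales (auto simp: subalgebra_def F sF)
  interpret GS: finite_measure_subalgebra M G
    by unfold_locales (auto simp: subalgebra_def spG sGM)
  have YM[measurable]: "Y \<in> borel_measurable M" using Y by auto
  define EY where "EY = real_cond_exp M F Y"
  have EYF: "EY \<in> borel_measurable F" unfolding EY_def by simp
  have EYG: "EY \<in> borel_measurable G" using measurable_mono[OF order_refl refl FG] EYF F spG by auto
  have EYU: "EY \<in> borel_measurable (vimage_algebra (space M) U SU)"
    using measurable_mono[OF order_refl refl F(1)] EYF F by auto
  have EYint: "integrable M EY" unfolding EY_def by (rule FS.real_cond_exp_int(1)[OF Y(2)])
  have EYM[measurable]: "EY \<in> borel_measurable M" using EYint by auto
  have Int_stable: "Int_stable Gen"
  proof (rule Int_stableI)
    fix x y assume "x \<in> Gen" "y \<in> Gen"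
    then obtain a b a' b' where "x = a \<inter> b" "y = a' \<inter> b'" "a \<in> sets F" "b \<in> sets VA" "a' \<in> sets F" "b' \<in> sets VA"
      unfolding Gen_def by auto
    then show "x \<inter> y \<in> Gen" unfolding Gen_def
      by (intro CollectI exI[of _ "a \<inter> a'"] exI[of _ "b \<inter> b'"]) auto
  qed
  have key: "(\<integral>x\<in>A. Y x \<partial>M) = (\<integral>x\<in>A. EY x \<partial>M)" if A: "A \<in> sets G" for A
  proof -
    have "A \<in> sigma_sets (space M) Gen" using A sG by auto
    from Int_stable Gen_Pow this show ?thesis
    proof (induct rule: sigma_sets_induct_disjoint)
      case (basic A)
      then obtain a b where ab: "A = a \<inter> b" "a \<in> sets F" "b \<in> sets VA" unfolding Gen_def by auto
      have aM: "a \<in> sets M" using ab sF by auto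
      have bM: "b \<in> sets M" using ab sV by auto
      have aU: "a \<in> sets (vimage_algebra (space M) U SU)" using ab F by auto
      have ind1: "indep_var borel (\<lambda>x. indicator a x * Y x) borel (indicator b :: 'a \<Rightarrow> real)"
        by (rule indep_var_vimage[OF ind])
          (use aU Y ab in \<open>auto simp: VA_def intro!: borel_measurable_times borel_measurable_indicator\<close>)
      have ind2: "indep_var borel (\<lambda>x. indicator a x * EY x) borel (indicator b :: 'a \<Rightarrow> real)"
        by (rule indep_var_vimage[OF ind])
          (use aU EYU ab in \<open>auto simp: VA_def intro!: borel_measurable_times borel_measurable_indicator\<close>)
      have iaY: "integrable M (\<lambda>x. indicator a x * Y x)" using integrable_mult_indicator[OF aM Y(2)] by simp
      have iaE: "integrable M (\<lambda>x. indicator a x * EY x)" using integrable_mult_indicator[OF aM EYint] by simp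
      have ib: "integrable M (indicator b :: 'a \<Rightarrow> real)" using bM by (simp add: emeasure_eq_measure)
      have "(\<integral>x\<in>A. Y x \<partial>M) = (\<integral>x. (indicator a x * Y x) * indicator b x \<partial>M)"
        unfolding set_lebesgue_integral_def ab by (rule Bochner_Integration.integral_cong) (auto simp: indicator_def)
      also have "\<dots> = (\<integral>x. indicator a x * Y x \<partial>M) * (\<integral>x. indicator b x \<partial>M)"
        by (rule indep_var_lebesgue_integral[OF ind1 iaY ib])
      also have "(\<integral>x. indicator a x * Y x \<partial>M) = (\<integral>x. indicator a x * EY x \<partial>M)"
        using FS.real_cond_exp_intA[OF Y(2) ab(2)] unfolding EY_def set_lebesgue_integral_def by simp
      also have "(\<integral>x. indicator a x * EY x \<partial>M) * (\<integral>x. indicator b x \<partial>M) = (\<integral>x. (indicator a x * EY x) * indicator b x \<partial>M)"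
        by (rule indep_var_lebesgue_integral[OF ind2 iaE ib, symmetric])
      also have "\<dots> = (\<integral>x\<in>A. EY x \<partial>M)"
        unfolding set_lebesgue_integral_def ab by (rule Bochner_Integration.integral_cong) (auto simp: indicator_def)
      finally show ?case .
    next
      case empty
      then show ?case by (simp add: set_lebesgue_integral_def)
    next
      case (compl A)
      have AM: "A \<in> sets M" using compl(1) sG sGM by auto
      have "(\<integral>x. Y x \<partial>M) = (\<integral>x. EY x \<partial>M)" unfolding EY_def using FS.real_cond_exp_int(2)[OF Y(2)] by simp
      then show ?case using compl(2) set_integral_compl_space[OF Y(2) AM] set_integral_compl_space[OF EYint AM] by simp
    next
      case (union A)
      have AM: "\<And>i. A i \<in> sets M" using union(2) sG sGM by auto
      have disj: "\<And>i j. i \<noteq> j \<Longrightarrow> A i \<inter> A j = {}" using union(1) unfolding disjoint_family_on_def by auto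
      have UM: "(\<Union>i. A i) \<in> sets M" using AM by auto
      have s1: "set_integrable M (\<Union>i. A i) Y" unfolding set_integrable_def
        using integrable_mult_indicator[OF UM Y(2)] by simp
      have s2: "set_integrable M (\<Union>i. A i) EY" unfolding set_integrable_def
        using integrable_mult_indicator[OF UM EYint] by simp
      show ?case
        using lebesgue_integral_countable_add[OF AM disj s1] lebesgue_integral_countable_add[OF AM disj s2] union(3)
        by simp
    qed
  qed
  have "AE w in M. real_cond_exp M G Y w = EY w"
    by (rule GS.real_cond_exp_charact[OF key Y(2) EYint EYG])
  then show ?thesis unfolding G_def Gen_def VA_def EY_def by simp
qed



lemma integrable_bounded_mult:
  fixes Y g :: "'a \<Rightarrow> real"
  assumes "integrable M Y" "g \<in> borel_measurable M" "AE w in M. \<bar>g w\<bar> \<le> C"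
  shows "integrable M (\<lambda>w. g w * Y w)"
proof (rule Bochner_Integration.integrable_bound[of _ "\<lambda>w. C * Y w"])
  show "integrable M (\<lambda>w. C * Y w)" using assms(1) by simp
  show "(\<lambda>w. g w * Y w) \<in> borel_measurable M" using assms by auto
  show "AE w in M. norm (g w * Y w) \<le> norm (C * Y w)"
    using assms(3) by eventually_elim (auto simp: abs_mult intro!: mult_right_mono)
qed

lemma (in prob_space) cond_exp_indep_integral:
  fixes Y g :: "'a \<Rightarrow> real"
  assumes ind: "indep_var SU U SV V"
    and F: "sets F \<subseteq> sets (vimage_algebra (space M) U SU)" "space F = space M"
    and Y: "Y \<in> borel_measurable (vimage_algebra (space M) U SU)" "integrable M Y"
    and g: "g \<in> borel_measurable (sigma (space M) {a \<inter> b | a b. a \<in> sets F \<and> b \<in> sets (vimage_algebra (space M) V SV)})"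
    and gb: "AE w in M. \<bar>g w\<bar> \<le> C"
  shows "(\<integral>w. Y w * g w \<partial>M) = (\<integral>w. real_cond_exp M F Y w * g w \<partial>M)"
proof -
  define VA where "VA = vimage_algebra (space M) V SV"
  define Gen where "Gen = {a \<inter> b | a b. a \<in> sets F \<and> b \<in> sets VA}"
  define G where "G = sigma (space M) Gen"
  have U: "U \<in> measurable M SU" using ind by (rule indep_var_rv1)
  have V: "V \<in> measurable M SV" using ind by (rule indep_var_rv2)
  have sU: "sets (vimage_algebra (space M) U SU) \<subseteq> sets M" by (rule sets_image_in_sets[OF refl U])
  have sV: "sets VA \<subseteq> sets M" unfolding VA_def by (rule sets_image_in_sets[OF refl V])
  have sF: "sets F \<subseteq> sets M" using F sU by auto
  have Gen_sub: "Gen \<subseteq> sets M" unfolding Gen_def using sF sV by auto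
  have Gen_Pow: "Gen \<subseteq> Pow (space M)" using Gen_sub sets.sets_into_space by auto
  have sG: "sets G = sigma_sets (space M) Gen" unfolding G_def by (rule sets_measure_of[OF Gen_Pow])
  have spG: "space G = space M" unfolding G_def by (rule space_measure_of[OF Gen_Pow])
  have sGM: "sets G \<subseteq> sets M" unfolding sG by (rule sets.sigma_sets_subset[OF Gen_sub])
  interpret FS: finite_measure_subalgebra M F
    by unfold_locales (auto simp: subalgebra_def F sF)
  interpret GS: finite_measure_subalgebra M G
    by unfold_locales (auto simp: subalgebra_def spG sGM)
  have YM[measurable]: "Y \<in> borel_measurable M" using Y by auto
  have gG[measurable]: "g \<in> borel_measurable G" using g unfolding G_def Gen_def VA_def .
  have gM[measurable]: "g \<in> borel_measurable M" using measurable_mono[OF order_refl refl sGM spG, of borel] gG by blast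
  have ae: "AE w in M. real_cond_exp M G Y w = real_cond_exp M F Y w"
    using cond_exp_indep_sets[OF ind F Y] unfolding G_def Gen_def VA_def .
  have igY: "integrable M (\<lambda>w. g w * Y w)" by (rule integrable_bounded_mult[OF Y(2) gM gb])
  have "(\<integral>w. Y w * g w \<partial>M) = (\<integral>w. g w * Y w \<partial>M)" by (simp add: mult.commute)
  also have "\<dots> = (\<integral>w. g w * real_cond_exp M G Y w \<partial>M)"
    by (rule GS.real_cond_exp_intg(2)[symmetric, OF igY gG YM])
  also have "\<dots> = (\<integral>w. real_cond_exp M F Y w * g w \<partial>M)"
    by (rule integral_cong_AE) (use ae in \<open>auto simp: mult.commute\<close>)
  finally show ?thesis .
qed



lemma vimage_sets_mono_comp:
  assumes "\<psi> \<in> measurable M T" "h \<in> measurable T S" "\<And>x. x \<in> space M \<Longrightarrow> \<phi> x = h (\<psi> x)"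
  shows "sets (vimage_algebra (space M) \<phi> S) \<subseteq> sets (vimage_algebra (space M) \<psi> T)"
proof (rule sets_image_in_sets[OF space_vimage_algebra])
  have "(\<lambda>x. h (\<psi> x)) \<in> measurable (vimage_algebra (space M) \<psi> T) S"
    by (rule measurable_compose[OF measurable_vimage_algebra1 assms(2)]) (use assms(1) in \<open>simp add: measurable_def\<close>)
  then show "\<phi> \<in> measurable (vimage_algebra (space M) \<psi> T) S"
    by (rule measurable_cong[THEN iffD1, rotated]) (use assms(3) in auto)
qed

lemma meas_vimage_comp:
  assumes "\<psi> \<in> measurable M T" "h \<in> measurable T S" "\<And>x. x \<in> space M \<Longrightarrow> \<phi> x = h (\<psi> x)"
  shows "\<phi> \<in> measurable (vimage_algebra (space M) \<psi> T) S"
proof -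
  have "(\<lambda>x. h (\<psi> x)) \<in> measurable (vimage_algebra (space M) \<psi> T) S"
    by (rule measurable_compose[OF measurable_vimage_algebra1 assms(2)]) (use assms(1) in \<open>simp add: measurable_def\<close>)
  then show ?thesis
    by (rule measurable_cong[THEN iffD1, rotated]) (use assms(3) in auto)
qed

lemma sigma_Gen_facts:
  assumes "space F = X"
  shows "space (sigma X {a \<inter> b | a b. a \<in> sets F \<and> b \<in> sets (vimage_algebra X V SV)}) = X"
    and "sets F \<subseteq> sets (sigma X {a \<inter> b | a b. a \<in> sets F \<and> b \<in> sets (vimage_algebra X V SV)})"
    and "sets (vimage_algebra X V SV) \<subseteq> sets (sigma X {a \<inter> b | a b. a \<in> sets F \<and> b \<in> sets (vimage_algebra X V SV)})"
proof -
  let ?Gen = "{a \<inter> b | a b. a \<in> sets F \<and> b \<in> sets (vimage_algebra X V SV)}"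
  have P: "?Gen \<subseteq> Pow X"
    using sets.sets_into_space[of _ F] sets.sets_into_space[of _ "vimage_algebra X V SV"] assms by auto
  show "space (sigma X ?Gen) = X" by (rule space_measure_of[OF P])
  have S: "sets (sigma X ?Gen) = sigma_sets X ?Gen" by (rule sets_measure_of[OF P])
  show "sets F \<subseteq> sets (sigma X ?Gen)"
  proof
    fix a assume a: "a \<in> sets F"
    have "a \<inter> X \<in> ?Gen" using a sets_vimage_algebra_space[of X V SV] by blast
    moreover have "a \<inter> X = a" using a assms sets.sets_into_space by blast
    ultimately show "a \<in> sets (sigma X ?Gen)" unfolding S by auto
  qed
  show "sets (vimage_algebra X V SV) \<subseteq> sets (sigma X ?Gen)"
  proof
    fix b assume b: "b \<in> sets (vimage_algebra X V SV)"
    have "X \<inter> b \<in> ?Gen" using b sets.top[of F] assms by blast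
    moreover have "X \<inter> b = b" using b sets.sets_into_space by fastforce
    ultimately show "b \<in> sets (sigma X ?Gen)" unfolding S by auto
  qed
qed

lemma measurable_sets_sub:
  assumes "f \<in> measurable A N" "sets A \<subseteq> sets B" "space A = space B"
  shows "f \<in> measurable B N"
  using measurable_mono[OF order_refl refl assms(2,3), of N] assms(1) by blast

lemma vec_nth_borel[measurable]: "(\<lambda>x::real^'n. x $ k) \<in> borel_measurable borel"
  by (rule borel_measurable_continuous_onI) (intro continuous_intros)

lemma vec_nth_borel'[measurable (raw)]: "f \<in> borel_measurable M \<Longrightarrow> (\<lambda>x. (f x :: real^'n) $ k) \<in> borel_measurable M"
  using measurable_compose[OF _ vec_nth_borel] by blast

lemma mv_borel[measurable]: "(\<lambda>x. (B::real^'n^'m) *v x) \<in> borel_measurable borel"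
  by (intro borel_measurable_continuous_onI linear_continuous_on)
     (simp add: linear_conv_bounded_linear[symmetric] matrix_vector_mul_linear)

lemma mv_borel'[measurable (raw)]: "f \<in> borel_measurable M \<Longrightarrow> (\<lambda>x. (B::real^'n^'m) *v (f x)) \<in> borel_measurable M"
  using measurable_compose[OF _ mv_borel] by blast

lemma diff_bound:
  fixes a b c q y d :: real
  assumes "c > 0" "c \<le> a" "c \<le> b" "0 \<le> q" "\<bar>a - b\<bar> \<le> d"
  shows "\<bar>q / a * y - y * (q / b)\<bar> \<le> q * \<bar>y\<bar> * d / c\<^sup>2"
proof -
  have a0: "a > 0" and b0: "b > 0" using assms by auto
  have "q / a * y - y * (q / b) = q * y * (b - a) / (a * b)" using a0 b0 by (simp add: field_simps)
  then have "\<bar>q / a * y - y * (q / b)\<bar> = q * \<bar>y\<bar> * \<bar>a - b\<bar> / (a * b)"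
    using a0 b0 assms(4) by (simp add: abs_mult abs_minus_commute)
  also have "\<dots> \<le> q * \<bar>y\<bar> * d / (a * b)"
    using a0 b0 assms by (intro divide_right_mono mult_left_mono) auto
  also have "\<dots> \<le> q * \<bar>y\<bar> * d / c\<^sup>2"
  proof (rule divide_left_mono)
    show "c\<^sup>2 \<le> a * b" using assms by (simp add: power2_eq_square mult_mono)
    show "0 \<le> q * \<bar>y\<bar> * d" using assms by (intro mult_nonneg_nonneg) auto
    show "0 < a * b * c\<^sup>2" using a0 b0 assms by simp
  qed
  finally show ?thesis .
qed

lemma amgm_bound:
  fixes s d t :: real
  assumes "t > 0" "0 \<le> d" "d \<le> 1"
  shows "s * d \<le> t * s\<^sup>2 + d / t"
proof -
  have "0 \<le> (t * s - d / 2)\<^sup>2" by simp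
  then have "s * d \<le> t * s\<^sup>2 + d\<^sup>2 / (4 * t)" using assms(1)
    by (simp add: power2_eq_square field_simps)
  also have "d\<^sup>2 / (4 * t) \<le> d / t"
  proof -
    have "d * d \<le> d * 4" using assms by (intro mult_left_mono) auto
    then show ?thesis using assms by (simp add: power2_eq_square field_simps)
  qed
  finally show ?thesis by simp
qed



definition cl :: "(nat \<Rightarrow> 'a \<Rightarrow> 'z) \<Rightarrow> (nat \<Rightarrow> 'a \<Rightarrow> real) \<Rightarrow> (nat \<Rightarrow> 'a \<Rightarrow> 'x) \<Rightarrow> (nat \<Rightarrow> 'a \<Rightarrow> real)
   \<Rightarrow> (nat \<Rightarrow> 'a \<Rightarrow> real^'m) \<Rightarrow> nat \<Rightarrow> 'a \<Rightarrow> ('z \<times> real \<times> 'x \<times> real \<times> (real^'m))" where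
  "cl Z E X A \<Delta> j w = (Z j w, E j w, X j w, A j w, \<Delta> j w)"

definition oth :: "nat set \<Rightarrow> (nat \<Rightarrow> 'a \<Rightarrow> 'u) \<Rightarrow> nat \<Rightarrow> 'a \<Rightarrow> (nat \<Rightarrow> 'u)" where
  "oth I U i w = restrict (\<lambda>j. U j w) (I - {i})"

definition qclip :: "(nat \<Rightarrow> 'a \<Rightarrow> real) \<Rightarrow> (nat \<Rightarrow> 'a \<Rightarrow> real) \<Rightarrow> nat \<Rightarrow> 'a \<Rightarrow> real" where
  "qclip q E i w = (if E i w = 1 then max 0 (min 1 (q i w)) else 0)"

context
  fixes M :: "'a measure" and SZ :: "'z measure" and SX :: "'x measure"
    and N :: nat
    and Z :: "nat \<Rightarrow> 'a \<Rightarrow> 'z" and X :: "nat \<Rightarrow> 'a \<Rightarrow> 'x"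
    and E :: "nat \<Rightarrow> 'a \<Rightarrow> real" and A :: "nat \<Rightarrow> 'a \<Rightarrow> real"
    and \<Delta> :: "nat \<Rightarrow> 'a \<Rightarrow> real^'m"
    and b :: "'z \<Rightarrow> real^'q" and \<mu>b :: "real^'q"
    and q :: "nat \<Rightarrow> 'a \<Rightarrow> real"
    and pihat :: "nat \<Rightarrow> nat \<Rightarrow> 'a \<Rightarrow> real"
    and c :: real
  assumes P: "prob_space M"
    and indep: "prob_space.indep_vars M (\<lambda>_. SZ \<Otimes>\<^sub>M borel \<Otimes>\<^sub>M SX \<Otimes>\<^sub>M borel \<Otimes>\<^sub>M borel)
                  (\<lambda>i w. (Z i w, E i w, X i w, A i w, \<Delta> i w)) {1..N}"
    and E01: "\<And>i w. i \<in> {1..N} \<Longrightarrow> w \<in> space M \<Longrightarrow> E i w \<in> {0, 1}"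
    and A01: "\<And>i w. i \<in> {1..N} \<Longrightarrow> w \<in> space M \<Longrightarrow> A i w \<in> {0, 1}"
    and AE0: "\<And>i w. i \<in> {1..N} \<Longrightarrow> w \<in> space M \<Longrightarrow> E i w = 0 \<Longrightarrow> A i w = 0"
    and \<Delta>_int: "\<And>i. i \<in> {1..N} \<Longrightarrow> integrable M (\<Delta> i)"
    and b_meas: "b \<in> borel_measurable SZ"
    and b_mean: "\<And>i. i \<in> {1..N} \<Longrightarrow> has_bochner_integral M (\<lambda>w. b (Z i w)) \<mu>b"
    and q_meas: "\<And>i. i \<in> {1..N} \<Longrightarrow>
        q i \<in> borel_measurable (gen_sigma M (\<lambda>w. \<lambda>j\<in>{1..N}. (E j w, Z j w))
                                       (PiM {1..N} (\<lambda>_. borel \<Otimes>\<^sub>M SZ)))"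
    and q_nonneg: "AE w in M. \<forall>i\<in>{1..N}. E i w = 1 \<longrightarrow> q i w \<ge> 0"
    and q_sum: "AE w in M. (\<Sum>i\<in>{i\<in>{1..N}. E i w = 1}. q i w) = 1"
    and q_cal: "AE w in M. (\<Sum>i\<in>{i\<in>{1..N}. E i w = 1}. q i w *\<^sub>R b (Z i w)) = \<mu>b"
    and pihat_meas: "\<And>n i. i \<in> {1..N} \<Longrightarrow> pihat n i \<in> borel_measurable M"
    and part_ign: "\<And>i. i \<in> {1..N} \<Longrightarrow> AE w in M. E i w = 1 \<and> A i w = 1 \<longrightarrow>
        vec_cond_exp M (gen_sigma M (\<lambda>v. (Z i v, X i v, E i v, A i v))
                          (SZ \<Otimes>\<^sub>M SX \<Otimes>\<^sub>M borel \<Otimes>\<^sub>M borel)) (\<Delta> i) w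
      = vec_cond_exp M (gen_sigma M (\<lambda>v. (Z i v, X i v, E i v))
                          (SZ \<Otimes>\<^sub>M SX \<Otimes>\<^sub>M borel)) (\<Delta> i) w"
    and enr_ign: "\<And>i. i \<in> {1..N} \<Longrightarrow> AE w in M. E i w = 1 \<longrightarrow>
        vec_cond_exp M (gen_sigma M (\<lambda>v. (Z i v, E i v)) (SZ \<Otimes>\<^sub>M borel)) (\<Delta> i) w
      = vec_cond_exp M (gen_sigma M (Z i) SZ) (\<Delta> i) w"
    and moment_suff: "\<exists>B :: real^'q^'m. \<forall>i\<in>{1..N}. AE w in M.
        vec_cond_exp M (gen_sigma M (Z i) SZ) (\<Delta> i) w = B *v b (Z i w)"
    and c_pos: "c > 0"
    and overlap: "\<And>i. i \<in> {1..N} \<Longrightarrow> AE w in M. E i w = 1 \<longrightarrow> pi_part M SZ SX Z X E A i w \<ge> c"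
    and pihat_bds: "\<And>n i. i \<in> {1..N} \<Longrightarrow> AE w in M. E i w = 1 \<longrightarrow> c \<le> pihat n i w \<and> pihat n i w \<le> 1"
    and consist: "(\<lambda>n. prob_space.expectation M (\<lambda>w.
        Max (insert 0 ((\<lambda>i. \<bar>pihat n i w - pi_part M SZ SX Z X E A i w\<bar>) ` {i\<in>{1..N}. E i w = 1}))))
        \<longlonglongrightarrow> 0"
    and bdd_moment: "integrable M (\<lambda>w. (\<Sum>i\<in>{i\<in>{1..N}. A i w = 1}. q i w * norm (\<Delta> i w))\<^sup>2)"
begin

lemma U_meas: "i \<in> {1..N} \<Longrightarrow> cl Z E X A \<Delta> i \<in> measurable M (SZ \<Otimes>\<^sub>M borel \<Otimes>\<^sub>M SX \<Otimes>\<^sub>M borel \<Otimes>\<^sub>M borel)"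
proof -
  assume i: "i \<in> {1..N}"
  interpret prob_space M by (rule P)
  have "(\<lambda>w. (Z i w, E i w, X i w, A i w, \<Delta> i w)) \<in> measurable M (SZ \<Otimes>\<^sub>M borel \<Otimes>\<^sub>M SX \<Otimes>\<^sub>M borel \<Otimes>\<^sub>M borel)"
    using indep i unfolding indep_vars_def by auto
  then show ?thesis by (simp add: cl_def[abs_def])
qed

lemma comp_meas:
  assumes i: "i \<in> {1..N}"
  shows "Z i \<in> measurable M SZ" "E i \<in> borel_measurable M" "X i \<in> measurable M SX"
    "A i \<in> borel_measurable M" "\<Delta> i \<in> borel_measurable M"
proof -
  have U: "cl Z E X A \<Delta> i \<in> measurable M (SZ \<Otimes>\<^sub>M borel \<Otimes>\<^sub>M SX \<Otimes>\<^sub>M borel \<Otimes>\<^sub>M borel)"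
    by (rule U_meas[OF i])
  have "(\<lambda>w. fst (cl Z E X A \<Delta> i w)) \<in> measurable M SZ" using U by measurable
  then show "Z i \<in> measurable M SZ" by (simp add: cl_def)
  have "(\<lambda>w. fst (snd (cl Z E X A \<Delta> i w))) \<in> borel_measurable M" using U by measurable
  then show "E i \<in> borel_measurable M" by (simp add: cl_def)
  have "(\<lambda>w. fst (snd (snd (cl Z E X A \<Delta> i w)))) \<in> measurable M SX" using U by measurable
  then show "X i \<in> measurable M SX" by (simp add: cl_def)
  have "(\<lambda>w. fst (snd (snd (snd (cl Z E X A \<Delta> i w))))) \<in> borel_measurable M" using U by measurable
  then show "A i \<in> borel_measurable M" by (simp add: cl_def)
  have "(\<lambda>w. snd (snd (snd (snd (cl Z E X A \<Delta> i w))))) \<in> borel_measurable M" using U by measurable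
  then show "\<Delta> i \<in> borel_measurable M" by (simp add: cl_def)
qed

lemma client_indep:
  assumes i: "i \<in> {1..N}"
  shows "prob_space.indep_var M (PiM {i} (\<lambda>_. SZ \<Otimes>\<^sub>M borel \<Otimes>\<^sub>M SX \<Otimes>\<^sub>M borel \<Otimes>\<^sub>M borel))
       (\<lambda>w. restrict (\<lambda>j. cl Z E X A \<Delta> j w) {i})
     (PiM ({1..N} - {i}) (\<lambda>_. SZ \<Otimes>\<^sub>M borel \<Otimes>\<^sub>M SX \<Otimes>\<^sub>M borel \<Otimes>\<^sub>M borel)) (oth {1..N} (cl Z E X A \<Delta>) i)"
proof -
  interpret prob_space M by (rule P)
  have ind: "indep_vars (\<lambda>_. SZ \<Otimes>\<^sub>M borel \<Otimes>\<^sub>M SX \<Otimes>\<^sub>M borel \<Otimes>\<^sub>M borel) (cl Z E X A \<Delta>) {1..N}"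
    using indep by (simp add: cl_def[abs_def])
  have "(\<lambda>\<omega>. restrict (\<lambda>j. cl Z E X A \<Delta> j \<omega>) ({1..N} - {i})) = oth {1..N} (cl Z E X A \<Delta>) i"
    by (auto simp: oth_def[abs_def])
  with indep_var_restrict[OF ind, of "{i}" "{1..N} - {i}"] i show ?thesis by auto
qed

lemma q_measM:
  assumes i: "i \<in> {1..N}"
  shows "q i \<in> borel_measurable M"
proof -
  have psi: "(\<lambda>w. \<lambda>j\<in>{1..N}. (E j w, Z j w)) \<in> measurable M (PiM {1..N} (\<lambda>_. borel \<Otimes>\<^sub>M SZ))"
  proof (rule measurable_restrict)
    fix j assume j: "j \<in> {1..N}"
    show "(\<lambda>w. (E j w, Z j w)) \<in> measurable M (borel \<Otimes>\<^sub>M SZ)"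
      using comp_meas[OF j] by (intro measurable_Pair) auto
  qed
  have "sets (gen_sigma M (\<lambda>w. \<lambda>j\<in>{1..N}. (E j w, Z j w)) (PiM {1..N} (\<lambda>_. borel \<Otimes>\<^sub>M SZ))) \<subseteq> sets M"
    unfolding gen_sigma_def by (rule sets_image_in_sets[OF refl psi])
  then show ?thesis
    using measurable_sets_sub[OF q_meas[OF i]] by (simp add: gen_sigma_def)
qed

lemma client_eq:
  assumes i: "i \<in> {1..N}"
    and B: "\<forall>i\<in>{1..N}. AE w in M. vec_cond_exp M (gen_sigma M (Z i) SZ) (\<Delta> i) w = B *v b (Z i w)"
  shows "(\<integral>w. (A i w * \<Delta> i w $ k) * (qclip q E i w / max c (pi_part M SZ SX Z X E A i w)) \<partial>M)
        = (\<integral>w. (B *v b (Z i w)) $ k * qclip q E i w \<partial>M)"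
proof -
  interpret prob_space M by (rule P)
  define SUc where "SUc = SZ \<Otimes>\<^sub>M (borel :: real measure) \<Otimes>\<^sub>M SX \<Otimes>\<^sub>M (borel :: real measure) \<Otimes>\<^sub>M (borel :: (real^'m) measure)"
  define SU where "SU = PiM {i} (\<lambda>_. SUc)"
  define U where "U = (\<lambda>w. restrict (\<lambda>j. cl Z E X A \<Delta> j w) {i})"
  define SV where "SV = PiM ({1..N} - {i}) (\<lambda>_. SUc)"
  define V where "V = oth {1..N} (cl Z E X A \<Delta>) i"
  note cm = comp_meas[OF i]
  note [measurable] = cm
  define F3 where "F3 = gen_sigma M (\<lambda>v. (Z i v, X i v, E i v)) (SZ \<Otimes>\<^sub>M SX \<Otimes>\<^sub>M borel)"
  define F4 where "F4 = gen_sigma M (\<lambda>v. (Z i v, X i v, E i v, A i v)) (SZ \<Otimes>\<^sub>M SX \<Otimes>\<^sub>M borel \<Otimes>\<^sub>M borel)"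
  define F2 where "F2 = gen_sigma M (\<lambda>v. (Z i v, E i v)) (SZ \<Otimes>\<^sub>M borel)"
  define F1 where "F1 = gen_sigma M (Z i) SZ"
  have spF: "space F1 = space M" "space F2 = space M" "space F3 = space M" "space F4 = space M"
    by (simp_all add: F1_def F2_def F3_def F4_def gen_sigma_def)
  have ind: "indep_var SU U SV V" using client_indep[OF i] unfolding SU_def U_def SV_def V_def SUc_def .
  have Um: "U \<in> measurable M SU" using ind by (rule indep_var_rv1)
  have Vm: "V \<in> measurable M SV" using ind by (rule indep_var_rv2)
  have pm: "(\<lambda>f. f i) \<in> measurable SU SUc" unfolding SU_def by (rule measurable_component_singleton) simp
  have pm'[measurable]: "(\<lambda>f. f i) \<in> measurable SU (SZ \<Otimes>\<^sub>M (borel :: real measure) \<Otimes>\<^sub>M SX \<Otimes>\<^sub>M (borel :: real measure) \<Otimes>\<^sub>M (borel :: (real^'m) measure))"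
    using pm unfolding SUc_def .
  have F3U: "sets F3 \<subseteq> sets (vimage_algebra (space M) U SU)"
    unfolding F3_def gen_sigma_def
    by (rule vimage_sets_mono_comp[OF Um, where h="\<lambda>f. (fst (f i), fst (snd (snd (f i))), fst (snd (f i)))"])
       (use pm in \<open>auto simp: SUc_def U_def cl_def\<close>)
  have F2U: "sets F2 \<subseteq> sets (vimage_algebra (space M) U SU)"
    unfolding F2_def gen_sigma_def
    by (rule vimage_sets_mono_comp[OF Um, where h="\<lambda>f. (fst (f i), fst (snd (f i)))"])
       (use pm in \<open>auto simp: SUc_def U_def cl_def\<close>)
  have F34: "sets F3 \<subseteq> sets F4"
    unfolding F3_def F4_def gen_sigma_def
    by (rule vimage_sets_mono_comp[where h="\<lambda>(z,x,e,a). (z,x,e)"]) auto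
  have F23: "sets F2 \<subseteq> sets F3"
    unfolding F3_def F2_def gen_sigma_def
    by (rule vimage_sets_mono_comp[where h="\<lambda>(z,x,e). (z,e)"]) auto
  have F12: "sets F1 \<subseteq> sets F2"
    unfolding F1_def F2_def gen_sigma_def
    by (rule vimage_sets_mono_comp[where h="fst"]) auto
  have F4M: "sets F4 \<subseteq> sets M" unfolding F4_def gen_sigma_def by (rule sets_image_in_sets) auto
  have F3M: "sets F3 \<subseteq> sets M" using F34 F4M by auto
  have F2M: "sets F2 \<subseteq> sets M" using F23 F3M by auto
  have F1M: "sets F1 \<subseteq> sets M" using F12 F2M by auto
  interpret F4S: finite_measure_subalgebra M F4 by unfold_locales (auto simp: subalgebra_def spF F4M)
  interpret F3S: finite_measure_subalgebra M F3 by unfold_locales (auto simp: subalgebra_def spF F3M)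
  interpret F2S: finite_measure_subalgebra M F2 by unfold_locales (auto simp: subalgebra_def spF F2M)
  interpret F1S: finite_measure_subalgebra M F1 by unfold_locales (auto simp: subalgebra_def spF F1M)
  define Y where "Y = (\<lambda>w. \<Delta> i w $ k)"
  define W where "W = (\<lambda>w. A i w * Y w)"
  have YU: "Y \<in> borel_measurable (vimage_algebra (space M) U SU)"
    unfolding Y_def
    apply (rule meas_vimage_comp[OF Um, where h="\<lambda>f. snd (snd (snd (snd (f i)))) $ k"])
     apply measurable
    apply (auto simp: U_def cl_def)
    done
  have WU: "W \<in> borel_measurable (vimage_algebra (space M) U SU)"
    unfolding W_def Y_def
    apply (rule meas_vimage_comp[OF Um, where h="\<lambda>f. fst (snd (snd (snd (f i)))) * snd (snd (snd (snd (f i)))) $ k"])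
     apply measurable
    apply (auto simp: U_def cl_def)
    done
  have Yint: "integrable M Y" unfolding Y_def
    by (rule integrable_bounded_linear[OF bounded_linear_vec_nth \<Delta>_int[OF i]])
  have [measurable]: "Y \<in> borel_measurable M" using Yint by auto
  have Abd: "AE w in M. \<bar>A i w\<bar> \<le> 1"
  proof (intro AE_I2)
    fix w assume "w \<in> space M"
    then have "A i w = 0 \<or> A i w = 1" using A01[OF i] by auto
    then show "\<bar>A i w\<bar> \<le> 1" by auto
  qed
  have Wint: "integrable M W" unfolding W_def
    by (rule integrable_bounded_mult[OF Yint _ Abd]) simp
  have [measurable]: "W \<in> borel_measurable M" using Wint by auto
  have qG: "q i \<in> borel_measurable (sigma (space M) {a \<inter> b | a b. a \<in> sets F \<and> b \<in> sets (vimage_algebra (space M) V SV)})"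
    if spF': "space F = space M" and EZF: "(\<lambda>w. (E i w, Z i w)) \<in> measurable F (borel \<Otimes>\<^sub>M SZ)" for F :: "'a measure"
  proof -
    define G where "G = sigma (space M) {a \<inter> b | a b. a \<in> sets F \<and> b \<in> sets (vimage_algebra (space M) V SV)}"
    note GF = sigma_Gen_facts[OF spF', of V SV, folded G_def]
    have psi: "(\<lambda>w. \<lambda>j\<in>{1..N}. (E j w, Z j w)) \<in> measurable G (PiM {1..N} (\<lambda>_. borel \<Otimes>\<^sub>M SZ))"
    proof (rule measurable_restrict)
      fix j assume j: "j \<in> {1..N}"
      show "(\<lambda>w. (E j w, Z j w)) \<in> measurable G (borel \<Otimes>\<^sub>M SZ)"
      proof (cases "j = i")
        case True
        then show ?thesis using measurable_sets_sub[OF EZF GF(2)] GF(1) spF' by simp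
      next
        case False
        have pj: "(\<lambda>f. f j) \<in> measurable SV SUc" unfolding SV_def
          by (rule measurable_component_singleton) (use j False in simp)
        have "(\<lambda>w. (E j w, Z j w)) \<in> measurable (vimage_algebra (space M) V SV) (borel \<Otimes>\<^sub>M SZ)"
          by (rule meas_vimage_comp[OF Vm, where h="\<lambda>f. (fst (snd (f j)), fst (f j))"])
             (use pj j False in \<open>auto simp: SUc_def V_def oth_def cl_def\<close>)
        then show ?thesis using measurable_sets_sub[OF _ GF(3)] GF(1) by simp
      qed
    qed
    have "sets (gen_sigma M (\<lambda>w. \<lambda>j\<in>{1..N}. (E j w, Z j w)) (PiM {1..N} (\<lambda>_. borel \<Otimes>\<^sub>M SZ))) \<subseteq> sets G"
      unfolding gen_sigma_def by (rule sets_image_in_sets[OF GF(1) psi])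
    then have "q i \<in> borel_measurable G"
      using measurable_sets_sub[OF q_meas[OF i]] GF(1) by (simp add: gen_sigma_def)
    then show ?thesis unfolding G_def .
  qed
  have EY_vec: "\<And>F w. vec_cond_exp M F (\<Delta> i) w $ k = real_cond_exp M F Y w"
    by (simp add: vec_cond_exp_def Y_def)
  define \<pi> where "\<pi> = pi_part M SZ SX Z X E A i"
  have \<pi>_def': "\<pi> = real_cond_exp M F3 (\<lambda>w. if A i w = 1 then 1 else 0)"
    unfolding \<pi>_def pi_part_def F3_def ..
  have \<pi>F3[measurable]: "\<pi> \<in> borel_measurable F3" by (simp add: \<pi>_def')
  have \<pi>M[measurable]: "\<pi> \<in> borel_measurable M" by (simp add: \<pi>_def')
  define qt where "qt = qclip q E i"
  have [measurable]: "q i \<in> borel_measurable M" by (rule q_measM[OF i])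
  have qtM[measurable]: "qt \<in> borel_measurable M" unfolding qt_def qclip_def by measurable
  have qt_bd: "\<And>w. \<bar>qt w\<bar> \<le> 1" by (simp add: qt_def qclip_def)
  have qt0: "\<And>w. E i w \<noteq> 1 \<Longrightarrow> qt w = 0" by (simp add: qt_def qclip_def)
  have EZF3: "(\<lambda>w. (E i w, Z i w)) \<in> measurable F3 (borel \<Otimes>\<^sub>M SZ)"
    unfolding F3_def gen_sigma_def
    by (rule meas_vimage_comp[where h="\<lambda>(z,x,e). (e,z)"]) auto
  have EZF2: "(\<lambda>w. (E i w, Z i w)) \<in> measurable F2 (borel \<Otimes>\<^sub>M SZ)"
    unfolding F2_def gen_sigma_def
    by (rule meas_vimage_comp[where h="\<lambda>(z,e). (e,z)"]) auto
  have EF3: "E i \<in> borel_measurable F3"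
    unfolding F3_def gen_sigma_def
    by (rule meas_vimage_comp[where h="\<lambda>(z,x,e). e"]) auto
  have EF2: "E i \<in> borel_measurable F2"
    unfolding F2_def gen_sigma_def
    by (rule meas_vimage_comp[where h="\<lambda>(z,e). e"]) auto
  define G3 where "G3 = sigma (space M) {a \<inter> b | a b. a \<in> sets F3 \<and> b \<in> sets (vimage_algebra (space M) V SV)}"
  define G2 where "G2 = sigma (space M) {a \<inter> b | a b. a \<in> sets F2 \<and> b \<in> sets (vimage_algebra (space M) V SV)}"
  note GF3 = sigma_Gen_facts[OF spF(3), of V SV, folded G3_def]
  note GF2 = sigma_Gen_facts[OF spF(2), of V SV, folded G2_def]
  have qG3[measurable]: "q i \<in> borel_measurable G3" unfolding G3_def by (rule qG[OF spF(3) EZF3])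
  have qG2[measurable]: "q i \<in> borel_measurable G2" unfolding G2_def by (rule qG[OF spF(2) EZF2])
  have EG3[measurable]: "E i \<in> borel_measurable G3" using measurable_sets_sub[OF EF3 GF3(2)] GF3(1) spF by simp
  have EG2[measurable]: "E i \<in> borel_measurable G2" using measurable_sets_sub[OF EF2 GF2(2)] GF2(1) spF by simp
  have \<pi>G3[measurable]: "\<pi> \<in> borel_measurable G3" using measurable_sets_sub[OF \<pi>F3 GF3(2)] GF3(1) spF by simp
  have qtG3: "qt \<in> borel_measurable G3" unfolding qt_def qclip_def by measurable
  have qtG2: "qt \<in> borel_measurable G2" unfolding qt_def qclip_def by measurable
  have gG3: "(\<lambda>w. qt w / max c (\<pi> w)) \<in> borel_measurable G3" using qtG3 by measurable
  have gbd: "AE w in M. \<bar>qt w / max c (\<pi> w)\<bar> \<le> 1 / c"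
  proof (intro AE_I2)
    fix w
    have "\<bar>qt w / max c (\<pi> w)\<bar> = \<bar>qt w\<bar> / max c (\<pi> w)" using c_pos by (simp add: abs_div)
    also have "\<dots> \<le> 1 / max c (\<pi> w)" using qt_bd[of w] c_pos by (intro divide_right_mono) auto
    also have "\<dots> \<le> 1 / c" using c_pos by (intro divide_left_mono) auto
    finally show "\<bar>qt w / max c (\<pi> w)\<bar> \<le> 1 / c" .
  qed
  have qtbd: "AE w in M. \<bar>qt w\<bar> \<le> 1" using qt_bd by auto
  define EY3 where "EY3 = real_cond_exp M F3 Y"
  define EY2 where "EY2 = real_cond_exp M F2 Y"
  have [measurable]: "EY3 \<in> borel_measurable M" "EY2 \<in> borel_measurable M" by (simp_all add: EY3_def EY2_def)
  have EY3F3[measurable]: "EY3 \<in> borel_measurable F3" by (simp add: EY3_def)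
  have S1: "(\<integral>w. W w * (qt w / max c (\<pi> w)) \<partial>M) = (\<integral>w. real_cond_exp M F3 W w * (qt w / max c (\<pi> w)) \<partial>M)"
    by (rule cond_exp_indep_integral[OF ind F3U spF(3) WU Wint gG3[unfolded G3_def] gbd])
  have AF4[measurable]: "A i \<in> borel_measurable F4"
    unfolding F4_def gen_sigma_def
    by (rule meas_vimage_comp[where h="\<lambda>(z,x,e,a). a"]) auto
  have s2a: "AE w in M. real_cond_exp M F3 (real_cond_exp M F4 W) w = real_cond_exp M F3 W w"
    by (rule F3S.real_cond_exp_nested_subalg) (auto simp: subalgebra_def spF F4M F34 Wint)
  have s2b: "AE w in M. real_cond_exp M F4 W w = A i w * real_cond_exp M F4 Y w"
    unfolding W_def by (rule F4S.real_cond_exp_mult) (use Wint[unfolded W_def] in auto)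
  have s2c: "AE w in M. A i w * real_cond_exp M F4 Y w = A i w * EY3 w"
    using part_ign[OF i, folded F4_def F3_def] AE_space
  proof eventually_elim
    case (elim w)
    have A01w: "A i w = 0 \<or> A i w = 1" using A01[OF i elim(2)] by auto
    show ?case
    proof (cases "A i w = 1")
      case True
      then have "E i w = 1" using AE0[OF i elim(2)] E01[OF i elim(2)] by auto
      with True elim(1) have "vec_cond_exp M F4 (\<Delta> i) w = vec_cond_exp M F3 (\<Delta> i) w" by simp
      then have "vec_cond_exp M F4 (\<Delta> i) w $ k = vec_cond_exp M F3 (\<Delta> i) w $ k" by simp
      then have "real_cond_exp M F4 Y w = EY3 w" unfolding EY_vec EY3_def .
      then show ?thesis by simp
    next
      case False
      then have "A i w = 0" using A01w by simp
      then show ?thesis by simp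
    qed
  qed
  have s2d: "AE w in M. real_cond_exp M F3 (real_cond_exp M F4 W) w = real_cond_exp M F3 (\<lambda>w. A i w * EY3 w) w"
  proof (rule F3S.real_cond_exp_cong)
    show "AE w in M. real_cond_exp M F4 W w = A i w * EY3 w" using s2b s2c by eventually_elim simp
  qed auto
  have comm: "(\<lambda>w. A i w * EY3 w) = (\<lambda>w. EY3 w * A i w)" by (auto simp: mult.commute)
  have EY3int: "integrable M EY3" unfolding EY3_def by (rule F3S.real_cond_exp_int(1)[OF Yint])
  have AEYint: "integrable M (\<lambda>w. EY3 w * A i w)"
    using integrable_bounded_mult[OF EY3int _ Abd] by (simp add: mult.commute)
  have s2e: "AE w in M. real_cond_exp M F3 (\<lambda>w. A i w * EY3 w) w = EY3 w * real_cond_exp M F3 (A i) w"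
    unfolding comm by (rule F3S.real_cond_exp_mult) (use AEYint in auto)
  have s2f: "AE w in M. real_cond_exp M F3 (A i) w = \<pi> w"
    unfolding \<pi>_def'
  proof (rule F3S.real_cond_exp_cong)
    show "AE w in M. A i w = (if A i w = 1 then 1 else 0)"
    proof (intro AE_I2)
      fix w assume "w \<in> space M"
      then have "A i w = 0 \<or> A i w = 1" using A01[OF i] by auto
      then show "A i w = (if A i w = 1 then 1 else 0)" by auto
    qed
  qed auto
  have S2: "AE w in M. real_cond_exp M F3 W w = EY3 w * \<pi> w"
    using s2a s2d s2e s2f by eventually_elim auto
  have S3: "(\<integral>w. real_cond_exp M F3 W w * (qt w / max c (\<pi> w)) \<partial>M) = (\<integral>w. EY3 w * qt w \<partial>M)"
  proof (rule integral_cong_AE)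
    show "AE w in M. real_cond_exp M F3 W w * (qt w / max c (\<pi> w)) = EY3 w * qt w"
      using S2 overlap[OF i]
    proof eventually_elim
      case (elim w)
      show ?case
      proof (cases "E i w = 1")
        case True
        then have "\<pi> w \<ge> c" using elim(2) unfolding \<pi>_def by auto
        then have "max c (\<pi> w) = \<pi> w" "\<pi> w > 0" using c_pos by auto
        then show ?thesis using elim(1) by simp
      next
        case False
        then show ?thesis using qt0 by simp
      qed
    qed
  qed auto
  have S4: "(\<integral>w. Y w * qt w \<partial>M) = (\<integral>w. EY3 w * qt w \<partial>M)"
    unfolding EY3_def by (rule cond_exp_indep_integral[OF ind F3U spF(3) YU Yint qtG3[unfolded G3_def] qtbd])
  have S5: "(\<integral>w. Y w * qt w \<partial>M) = (\<integral>w. EY2 w * qt w \<partial>M)"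
    unfolding EY2_def by (rule cond_exp_indep_integral[OF ind F2U spF(2) YU Yint qtG2[unfolded G2_def] qtbd])
  have S6: "(\<integral>w. EY2 w * qt w \<partial>M) = (\<integral>w. (B *v b (Z i w)) $ k * qt w \<partial>M)"
  proof (rule integral_cong_AE)
    show "AE w in M. EY2 w * qt w = (B *v b (Z i w)) $ k * qt w"
      using enr_ign[OF i, folded F2_def F1_def] bspec[OF B i, folded F1_def]
    proof eventually_elim
      case (elim w)
      show ?case
      proof (cases "E i w = 1")
        case True
        then have "vec_cond_exp M F2 (\<Delta> i) w = B *v b (Z i w)" using elim by simp
        then have "vec_cond_exp M F2 (\<Delta> i) w $ k = (B *v b (Z i w)) $ k" by simp
        then have "EY2 w = (B *v b (Z i w)) $ k" unfolding EY_vec EY2_def .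
        then show ?thesis by simp
      next
        case False
        then show ?thesis using qt0 by simp
      qed
    qed
  qed (use b_meas in measurable)
  have "(\<integral>w. W w * (qt w / max c (\<pi> w)) \<partial>M) = (\<integral>w. (B *v b (Z i w)) $ k * qt w \<partial>M)"
    using S1 S3 S4 S5 S6 by simp
  then show ?thesis unfolding W_def Y_def qt_def \<pi>_def .
qed

lemma pi_facts:
  assumes i: "i \<in> {1..N}"
  shows "pi_part M SZ SX Z X E A i \<in> borel_measurable M"
    "AE w in M. pi_part M SZ SX Z X E A i w \<le> 1"
proof -
  interpret prob_space M by (rule P)
  note [measurable] = comp_meas[OF i]
  define F3 where "F3 = gen_sigma M (\<lambda>v. (Z i v, X i v, E i v)) (SZ \<Otimes>\<^sub>M SX \<Otimes>\<^sub>M borel)"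
  have spF3: "space F3 = space M" by (simp add: F3_def gen_sigma_def)
  have F3M: "sets F3 \<subseteq> sets M" unfolding F3_def gen_sigma_def by (rule sets_image_in_sets) auto
  interpret F3S: finite_measure_subalgebra M F3
    by unfold_locales (auto simp: subalgebra_def F3M spF3)
  have pd: "pi_part M SZ SX Z X E A i = real_cond_exp M F3 (\<lambda>w. if A i w = 1 then 1 else 0)"
    unfolding pi_part_def F3_def ..
  show "pi_part M SZ SX Z X E A i \<in> borel_measurable M" unfolding pd by simp
  show "AE w in M. pi_part M SZ SX Z X E A i w \<le> 1" unfolding pd
  proof (rule F3S.real_cond_exp_le_c)
    have "(\<lambda>w. if A i w = 1 then 1 else 0 :: real) \<in> borel_measurable M" by measurable
    moreover have "AE w in M. norm (if A i w = 1 then 1 else 0 :: real) \<le> 1" by auto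
    ultimately show "integrable M (\<lambda>w. if A i w = 1 then 1 else 0 :: real)"
      by (intro integrable_const_bound[where B=1]) auto
  qed auto
qed



lemma good_ae:
  "AE w in M. \<forall>i\<in>{1..N}. (E i w = 1 \<longrightarrow> c \<le> pihat n i w \<and> pihat n i w \<le> 1
       \<and> c \<le> pi_part M SZ SX Z X E A i w \<and> 0 \<le> q i w \<and> q i w \<le> 1)
       \<and> pi_part M SZ SX Z X E A i w \<le> 1"
proof -
  interpret prob_space M by (rule P)
  have "AE w in M. \<forall>i\<in>{1..N}. (E i w = 1 \<longrightarrow> c \<le> pihat n i w \<and> pihat n i w \<le> 1
       \<and> c \<le> pi_part M SZ SX Z X E A i w) \<and> pi_part M SZ SX Z X E A i w \<le> 1"
  proof (rule AE_finite_allI)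
    fix i assume i: "i \<in> {1..N}"
    show "AE w in M. (E i w = 1 \<longrightarrow> c \<le> pihat n i w \<and> pihat n i w \<le> 1
       \<and> c \<le> pi_part M SZ SX Z X E A i w) \<and> pi_part M SZ SX Z X E A i w \<le> 1"
      using pihat_bds[OF i, of n] overlap[OF i] pi_facts(2)[OF i] by eventually_elim auto
  qed simp
  then show ?thesis using q_nonneg q_sum
  proof eventually_elim
    case (elim w)
    show ?case
    proof (intro ballI conjI impI)
      fix i assume i: "i \<in> {1..N}" and e: "E i w = 1"
      have h1: "c \<le> pihat n i w \<and> pihat n i w \<le> 1 \<and> c \<le> pi_part M SZ SX Z X E A i w"
        using bspec[OF elim(1) i] e by blast
      then show "c \<le> pihat n i w" "pihat n i w \<le> 1" "c \<le> pi_part M SZ SX Z X E A i w" by blast+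
      have qn: "\<forall>j\<in>{1..N}. E j w = 1 \<longrightarrow> 0 \<le> q j w" using elim(2) .
      then show "0 \<le> q i w" using i e by blast
      have "q i w \<le> (\<Sum>j\<in>{j\<in>{1..N}. E j w = 1}. q j w)"
        by (rule member_le_sum) (use qn i e in auto)
      then show "q i w \<le> 1" using elim(3) by simp
    next
      fix i assume i: "i \<in> {1..N}"
      show "pi_part M SZ SX Z X E A i w \<le> 1" using bspec[OF elim(1) i] by blast
    qed
  qed
qed

lemma main_comp:
  assumes N1: "N \<ge> 1"
    and B: "\<forall>i\<in>{1..N}. AE w in M. vec_cond_exp M (gen_sigma M (Z i) SZ) (\<Delta> i) w = B *v b (Z i w)"
  shows "(\<lambda>n. prob_space.expectation M (cal_est N A q (pihat n) \<Delta>) $ k - (B *v \<mu>b) $ k) \<longlonglongrightarrow> 0"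
proof -
  interpret prob_space M by (rule P)
  define \<pi> where "\<pi> = pi_part M SZ SX Z X E A"
  define D where "D = (\<lambda>n w. Max (insert 0 ((\<lambda>i. \<bar>pihat n i w - \<pi> i w\<bar>) ` {i\<in>{1..N}. E i w = 1})))"
  define S where "S = (\<lambda>w. \<Sum>i\<in>{i\<in>{1..N}. A i w = 1}. q i w * norm (\<Delta> i w))"
  define R where "R = (\<lambda>i w. (A i w * \<Delta> i w $ k) * (qclip q E i w / max c (\<pi> i w)))"
  define T where "T = (\<lambda>n i w. if A i w = 1 then q i w / pihat n i w * \<Delta> i w $ k else 0)"
  define m where "m = (\<lambda>i w. (B *v b (Z i w)) $ k)"
  define cal where "cal = (\<lambda>n. cal_est N A q (pihat n) \<Delta>)"
  have fin: "finite {1..N}" by simp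
  have ne1: "1 \<in> {1..N}" using N1 by simp
  have A01': "\<And>i w. i \<in> {1..N} \<Longrightarrow> w \<in> space M \<Longrightarrow> A i w = 0 \<or> A i w = 1" using A01 by auto
  have AE1: "\<And>i w. i \<in> {1..N} \<Longrightarrow> w \<in> space M \<Longrightarrow> A i w = 1 \<Longrightarrow> E i w = 1"
  proof -
    fix i w assume i: "i \<in> {1..N}" and w: "w \<in> space M" and a: "A i w = 1"
    show "E i w = 1" using E01[OF i w] AE0[OF i w] a by auto
  qed
  have \<pi>m[measurable]: "\<And>i. i \<in> {1..N} \<Longrightarrow> \<pi> i \<in> borel_measurable M" unfolding \<pi>_def by (rule pi_facts(1))
  have qclip_bd: "\<And>i w. \<bar>qclip q E i w\<bar> \<le> 1" by (simp add: qclip_def)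
  have qclipm: "\<And>i. i \<in> {1..N} \<Longrightarrow> qclip q E i \<in> borel_measurable M"
  proof -
    fix i assume i: "i \<in> {1..N}"
    note [measurable] = comp_meas[OF i] q_measM[OF i]
    show "qclip q E i \<in> borel_measurable M" unfolding qclip_def by measurable
  qed
  have Yint: "\<And>i. i \<in> {1..N} \<Longrightarrow> integrable M (\<lambda>w. \<Delta> i w $ k)"
    by (rule integrable_bounded_linear[OF bounded_linear_vec_nth \<Delta>_int])
  have blB: "bounded_linear (\<lambda>v. (B *v v) $ k)"
    by (rule bounded_linear_compose[OF bounded_linear_vec_nth matrix_vector_mul_bounded_linear])
  have bint: "\<And>i. i \<in> {1..N} \<Longrightarrow> integrable M (\<lambda>w. b (Z i w))"
    using b_mean by (rule integrable.intros)
  have mint: "\<And>i. i \<in> {1..N} \<Longrightarrow> integrable M (m i)"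
    unfolding m_def by (rule integrable_bounded_linear[OF blB bint])
  have mintg: "\<And>i. i \<in> {1..N} \<Longrightarrow> (\<integral>w. m i w \<partial>M) = (B *v \<mu>b) $ k"
    unfolding m_def using integral_bounded_linear[OF blB bint] has_bochner_integral_integral_eq[OF b_mean] by simp
  have Rint: "\<And>i. i \<in> {1..N} \<Longrightarrow> integrable M (R i)"
  proof -
    fix i assume i: "i \<in> {1..N}"
    note [measurable] = comp_meas[OF i] qclipm[OF i] \<pi>m[OF i]
    have "integrable M (\<lambda>w. (A i w * (qclip q E i w / max c (\<pi> i w))) * \<Delta> i w $ k)"
    proof (rule integrable_bounded_mult[OF Yint[OF i]])
      show "(\<lambda>w. A i w * (qclip q E i w / max c (\<pi> i w))) \<in> borel_measurable M" by measurable
      show "AE w in M. \<bar>A i w * (qclip q E i w / max c (\<pi> i w))\<bar> \<le> 1 / c"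
      proof (rule AE_I2)
        fix w assume w: "w \<in> space M"
        have "\<bar>A i w * (qclip q E i w / max c (\<pi> i w))\<bar> = \<bar>A i w\<bar> * (\<bar>qclip q E i w\<bar> / max c (\<pi> i w))"
          using c_pos by (simp add: abs_mult)
        also have "\<dots> \<le> 1 * (1 / max c (\<pi> i w))"
          using A01'[OF i w] qclip_bd[of i w] c_pos
          by (intro mult_mono divide_right_mono) auto
        also have "\<dots> \<le> 1 / c" using c_pos by (simp add: divide_left_mono)
        finally show "\<bar>A i w * (qclip q E i w / max c (\<pi> i w))\<bar> \<le> 1 / c" .
      qed
    qed
    then show "integrable M (R i)" unfolding R_def by (simp add: mult_ac)
  qed
  have mqint: "\<And>i. i \<in> {1..N} \<Longrightarrow> integrable M (\<lambda>w. m i w * qclip q E i w)"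
  proof -
    fix i assume i: "i \<in> {1..N}"
    have "AE w in M. \<bar>qclip q E i w\<bar> \<le> 1" using qclip_bd by simp
    from integrable_bounded_mult[OF mint[OF i] qclipm[OF i] this]
    show "integrable M (\<lambda>w. m i w * qclip q E i w)" by (simp add: mult.commute)
  qed
  have sumR: "(\<integral>w. (\<Sum>i\<in>{1..N}. R i w) \<partial>M) = (B *v \<mu>b) $ k"
  proof -
    have "(\<integral>w. (\<Sum>i\<in>{1..N}. R i w) \<partial>M) = (\<Sum>i\<in>{1..N}. (\<integral>w. R i w \<partial>M))"
      by (rule Bochner_Integration.integral_sum) (use Rint in auto)
    also have "\<dots> = (\<Sum>i\<in>{1..N}. (\<integral>w. m i w * qclip q E i w \<partial>M))"
      by (rule sum.cong[OF refl]) (unfold R_def m_def \<pi>_def, rule client_eq[OF _ B], simp)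
    also have "\<dots> = (\<integral>w. (\<Sum>i\<in>{1..N}. m i w * qclip q E i w) \<partial>M)"
      by (rule Bochner_Integration.integral_sum[symmetric]) (use mqint in auto)
    also have "\<dots> = (\<integral>w. (B *v \<mu>b) $ k \<partial>M)"
    proof (rule integral_cong_AE)
      show "AE w in M. (\<Sum>i\<in>{1..N}. m i w * qclip q E i w) = (B *v \<mu>b) $ k"
        using q_cal good_ae[of 0]
      proof eventually_elim
        case (elim w)
        have "(\<Sum>i\<in>{1..N}. qclip q E i w *\<^sub>R b (Z i w)) = (\<Sum>i\<in>{1..N}. if E i w = 1 then q i w *\<^sub>R b (Z i w) else 0)"
        proof (rule sum.cong[OF refl])
          fix i assume i: "i \<in> {1..N}"
          show "qclip q E i w *\<^sub>R b (Z i w) = (if E i w = 1 then q i w *\<^sub>R b (Z i w) else 0)"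
            using bspec[OF elim(2) i] by (auto simp: qclip_def)
        qed
        also have "\<dots> = (\<Sum>i\<in>{i\<in>{1..N}. E i w = 1}. q i w *\<^sub>R b (Z i w))"
          by (rule sum.inter_filter[OF fin, symmetric])
        also have "\<dots> = \<mu>b" by (rule elim(1))
        finally have eq: "(\<Sum>i\<in>{1..N}. qclip q E i w *\<^sub>R b (Z i w)) = \<mu>b" .
        have "(\<Sum>i\<in>{1..N}. m i w * qclip q E i w) = (B *v (\<Sum>i\<in>{1..N}. qclip q E i w *\<^sub>R b (Z i w))) $ k"
          by (simp add: m_def linear_sum[OF matrix_vector_mul_linear] matrix_vector_mult_scaleR mult.commute)
        then show ?case using eq by simp
      qed
    qed (use mqint in \<open>auto intro!: borel_measurable_sum\<close>)
    also have "\<dots> = (B *v \<mu>b) $ k" by (simp add: prob_space)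
    finally show ?thesis .
  qed
  have cal_eq: "\<And>n w. cal n w = (\<Sum>i\<in>{1..N}. if A i w = 1 then (q i w / pihat n i w) *\<^sub>R \<Delta> i w else 0)"
    unfolding cal_def cal_est_def by (rule sum.inter_filter[OF fin])
  have cal_int: "\<And>n. integrable M (cal n)"
  proof -
    fix n
    have "integrable M (\<lambda>w. \<Sum>i\<in>{1..N}. if A i w = 1 then (q i w / pihat n i w) *\<^sub>R \<Delta> i w else 0)"
    proof (rule Bochner_Integration.integrable_sum)
      fix i assume i: "i \<in> {1..N}"
      note [measurable] = comp_meas[OF i] q_measM[OF i] pihat_meas[OF i]
      show "integrable M (\<lambda>w. if A i w = 1 then (q i w / pihat n i w) *\<^sub>R \<Delta> i w else 0)"
      proof (rule Bochner_Integration.integrable_bound[of _ "\<lambda>w. (1 / c) *\<^sub>R \<Delta> i w"])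
        show "integrable M (\<lambda>w. (1 / c) *\<^sub>R \<Delta> i w)" using \<Delta>_int[OF i] by simp
        show "(\<lambda>w. if A i w = 1 then (q i w / pihat n i w) *\<^sub>R \<Delta> i w else 0) \<in> borel_measurable M"
          by measurable
        show "AE w in M. norm (if A i w = 1 then (q i w / pihat n i w) *\<^sub>R \<Delta> i w else 0) \<le> norm ((1 / c) *\<^sub>R \<Delta> i w)"
          using good_ae[of n] AE_space
        proof eventually_elim
          case (elim w)
          show ?case
          proof (cases "A i w = 1")
            case True
            then have e: "E i w = 1" using AE1[OF i elim(2)] by simp
            have g: "c \<le> pihat n i w" "0 \<le> q i w" "q i w \<le> 1" using bspec[OF elim(1) i] e by auto
            have "\<bar>q i w / pihat n i w\<bar> = q i w / pihat n i w" using g c_pos by simp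
            also have "\<dots> \<le> 1 / pihat n i w" using g c_pos by (intro divide_right_mono) auto
            also have "\<dots> \<le> 1 / c" using g c_pos by (intro divide_left_mono) auto
            finally have h: "\<bar>q i w / pihat n i w\<bar> \<le> 1 / c" .
            have "norm ((q i w / pihat n i w) *\<^sub>R \<Delta> i w) \<le> (1 / c) * norm (\<Delta> i w)"
              unfolding norm_scaleR real_norm_def by (rule mult_right_mono[OF h]) simp
            then show ?thesis using True c_pos by simp
          qed simp
        qed
      qed
    qed
    then show "integrable M (cal n)" by (simp add: cal_eq[abs_def])
  qed
  have calk: "\<And>n. prob_space.expectation M (cal n) $ k = (\<integral>w. (\<Sum>i\<in>{1..N}. T n i w) \<partial>M)"
  proof -
    fix n
    have "prob_space.expectation M (cal n) $ k = (\<integral>w. cal n w $ k \<partial>M)"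
      using integral_bounded_linear[OF bounded_linear_vec_nth cal_int[of n], of k] by simp
    also have "\<dots> = (\<integral>w. (\<Sum>i\<in>{1..N}. T n i w) \<partial>M)"
      by (rule Bochner_Integration.integral_cong[OF refl]) (auto simp: cal_eq T_def intro!: sum.cong)
    finally show "prob_space.expectation M (cal n) $ k = (\<integral>w. (\<Sum>i\<in>{1..N}. T n i w) \<partial>M)" .
  qed
  have Tint: "\<And>n. integrable M (\<lambda>w. \<Sum>i\<in>{1..N}. T n i w)"
  proof -
    fix n
    have "integrable M (\<lambda>w. cal n w $ k)" by (rule integrable_bounded_linear[OF bounded_linear_vec_nth cal_int])
    moreover have "\<And>w. cal n w $ k = (\<Sum>i\<in>{1..N}. T n i w)" by (auto simp: cal_eq T_def intro!: sum.cong)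
    ultimately show "integrable M (\<lambda>w. \<Sum>i\<in>{1..N}. T n i w)" by simp
  qed
  have sRint: "integrable M (\<lambda>w. \<Sum>i\<in>{1..N}. R i w)"
    by (rule Bochner_Integration.integrable_sum) (rule Rint)
  have Sm[measurable]: "S \<in> borel_measurable M"
  proof -
    have "(\<lambda>w. \<Sum>i\<in>{1..N}. if A i w = 1 then q i w * norm (\<Delta> i w) else 0) \<in> borel_measurable M"
    proof (rule borel_measurable_sum)
      fix i assume i: "i \<in> {1..N}"
      note [measurable] = comp_meas[OF i] q_measM[OF i]
      show "(\<lambda>w. if A i w = 1 then q i w * norm (\<Delta> i w) else 0) \<in> borel_measurable M" by measurable
    qed
    moreover have "S = (\<lambda>w. \<Sum>i\<in>{1..N}. if A i w = 1 then q i w * norm (\<Delta> i w) else 0)"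
      unfolding S_def by (rule ext, rule sum.inter_filter[OF fin])
    ultimately show ?thesis by simp
  qed
  have Dm[measurable]: "\<And>n. D n \<in> borel_measurable M"
  proof -
    fix n
    have "(\<lambda>w. max 0 (Max ((\<lambda>i. if E i w = 1 then \<bar>pihat n i w - \<pi> i w\<bar> else 0) ` {1..N}))) \<in> borel_measurable M"
    proof (intro borel_measurable_max borel_measurable_const borel_measurable_Max fin)
      fix i assume i: "i \<in> {1..N}"
      note [measurable] = comp_meas[OF i] pihat_meas[OF i] \<pi>m[OF i]
      show "(\<lambda>w. if E i w = 1 then \<bar>pihat n i w - \<pi> i w\<bar> else 0) \<in> borel_measurable M" by measurable
    qed
    moreover have "D n = (\<lambda>w. max 0 (Max ((\<lambda>i. if E i w = 1 then \<bar>pihat n i w - \<pi> i w\<bar> else 0) ` {1..N})))"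
    proof (rule ext)
      fix w
      have "insert 0 ((\<lambda>i. \<bar>pihat n i w - \<pi> i w\<bar>) ` {i\<in>{1..N}. E i w = 1})
          = insert 0 ((\<lambda>i. if E i w = 1 then \<bar>pihat n i w - \<pi> i w\<bar> else 0) ` {1..N})"
        by auto
      moreover have "Max (insert 0 ((\<lambda>i. if E i w = 1 then \<bar>pihat n i w - \<pi> i w\<bar> else 0) ` {1..N}))
          = max 0 (Max ((\<lambda>i. if E i w = 1 then \<bar>pihat n i w - \<pi> i w\<bar> else 0) ` {1..N}))"
        by (rule Max_insert) (simp, use ne1 in blast)
      ultimately show "D n w = max 0 (Max ((\<lambda>i. if E i w = 1 then \<bar>pihat n i w - \<pi> i w\<bar> else 0) ` {1..N}))"
        unfolding D_def by simp
    qed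
    ultimately show "D n \<in> borel_measurable M" by simp
  qed
  have \<pi>eq: "\<And>i w. \<pi> i w = pi_part M SZ SX Z X E A i w" by (simp add: \<pi>_def)
  have Dprops: "\<And>n. AE w in M. 0 \<le> D n w \<and> D n w \<le> 1 \<and>
      (\<forall>i\<in>{1..N}. E i w = 1 \<longrightarrow> \<bar>pihat n i w - \<pi> i w\<bar> \<le> D n w)"
  proof -
    fix n
    show "AE w in M. 0 \<le> D n w \<and> D n w \<le> 1 \<and>
      (\<forall>i\<in>{1..N}. E i w = 1 \<longrightarrow> \<bar>pihat n i w - \<pi> i w\<bar> \<le> D n w)"
      using good_ae[of n]
    proof eventually_elim
      case (elim w)
      have finS: "finite (insert 0 ((\<lambda>i. \<bar>pihat n i w - \<pi> i w\<bar>) ` {i\<in>{1..N}. E i w = 1}))" by simp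
      have "0 \<le> D n w" unfolding D_def by (rule Max_ge[OF finS]) simp
      moreover have "\<forall>i\<in>{1..N}. E i w = 1 \<longrightarrow> \<bar>pihat n i w - \<pi> i w\<bar> \<le> D n w"
        unfolding D_def by (auto intro!: Max_ge[OF finS])
      moreover have "D n w \<le> 1" unfolding D_def
      proof (subst Max_le_iff[OF finS], simp, intro ballI)
        fix x assume "x \<in> insert 0 ((\<lambda>i. \<bar>pihat n i w - \<pi> i w\<bar>) ` {i\<in>{1..N}. E i w = 1})"
        then show "x \<le> 1"
        proof
          assume "x = 0" then show ?thesis by simp
        next
          assume "x \<in> (\<lambda>i. \<bar>pihat n i w - \<pi> i w\<bar>) ` {i\<in>{1..N}. E i w = 1}"
          then obtain i where i: "i \<in> {1..N}" "E i w = 1" and x: "x = \<bar>pihat n i w - \<pi> i w\<bar>" by auto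
          have "c \<le> pihat n i w" "pihat n i w \<le> 1" "c \<le> \<pi> i w" "\<pi> i w \<le> 1"
            using bspec[OF elim i(1)] i(2) by (auto simp: \<pi>eq)
          then show ?thesis using x c_pos by auto
        qed
      qed
      ultimately show ?case by blast
    qed
  qed
  have pw: "\<And>n. AE w in M. \<bar>(\<Sum>i\<in>{1..N}. T n i w) - (\<Sum>i\<in>{1..N}. R i w)\<bar> \<le> S w * D n w / c\<^sup>2"
  proof -
    fix n
    show "AE w in M. \<bar>(\<Sum>i\<in>{1..N}. T n i w) - (\<Sum>i\<in>{1..N}. R i w)\<bar> \<le> S w * D n w / c\<^sup>2"
      using good_ae[of n] Dprops[of n] AE_space
    proof eventually_elim
      case (elim w)
      have D0: "0 \<le> D n w" using elim(2) by blast
      have each: "\<bar>T n i w - R i w\<bar> \<le> (if A i w = 1 then q i w * norm (\<Delta> i w) * D n w / c\<^sup>2 else 0)"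
        if i: "i \<in> {1..N}" for i
      proof (cases "A i w = 1")
        case True
        then have e: "E i w = 1" using AE1[OF i elim(3)] by simp
        have g: "c \<le> pihat n i w" "c \<le> \<pi> i w" "0 \<le> q i w" "q i w \<le> 1"
          using bspec[OF elim(1) i] e by (auto simp: \<pi>eq)
        have dd: "\<bar>pihat n i w - \<pi> i w\<bar> \<le> D n w" using elim(2) i e by blast
        have qc: "qclip q E i w = q i w" using e g by (simp add: qclip_def)
        have mx: "max c (\<pi> i w) = \<pi> i w" using g by simp
        have "T n i w - R i w = q i w / pihat n i w * \<Delta> i w $ k - \<Delta> i w $ k * (q i w / \<pi> i w)"
          using True by (simp add: T_def R_def qc mx)
        then have "\<bar>T n i w - R i w\<bar> \<le> q i w * \<bar>\<Delta> i w $ k\<bar> * D n w / c\<^sup>2"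
          using diff_bound[OF c_pos g(1) g(2) g(3) dd] by simp
        also have "\<dots> \<le> q i w * norm (\<Delta> i w) * D n w / c\<^sup>2"
          using g D0 by (intro divide_right_mono mult_right_mono mult_left_mono component_le_norm_cart) auto
        finally show ?thesis using True by simp
      next
        case False
        then have "A i w = 0" using A01'[OF i elim(3)] by auto
        then show ?thesis using False by (simp add: T_def R_def)
      qed
      have "\<bar>(\<Sum>i\<in>{1..N}. T n i w) - (\<Sum>i\<in>{1..N}. R i w)\<bar> = \<bar>\<Sum>i\<in>{1..N}. T n i w - R i w\<bar>"
        by (simp add: sum_subtractf)
      also have "\<dots> \<le> (\<Sum>i\<in>{1..N}. \<bar>T n i w - R i w\<bar>)" by (rule sum_abs)
      also have "\<dots> \<le> (\<Sum>i\<in>{1..N}. if A i w = 1 then q i w * norm (\<Delta> i w) * D n w / c\<^sup>2 else 0)"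
        by (rule sum_mono) (rule each)
      also have "\<dots> = (\<Sum>i\<in>{i\<in>{1..N}. A i w = 1}. q i w * norm (\<Delta> i w) * D n w / c\<^sup>2)"
        by (rule sum.inter_filter[OF fin, symmetric])
      also have "\<dots> = S w * D n w / c\<^sup>2"
        unfolding S_def by (simp add: sum_distrib_right sum_divide_distrib)
      finally show ?case .
    qed
  qed
  have S2int: "integrable M (\<lambda>w. (S w)\<^sup>2)" using bdd_moment unfolding S_def .
  have Sint: "integrable M S"
  proof (rule Bochner_Integration.integrable_bound[of _ "\<lambda>w. (S w)\<^sup>2 + 1"])
    show "integrable M (\<lambda>w. (S w)\<^sup>2 + 1)" using S2int by simp
    show "S \<in> borel_measurable M" by simp
    show "AE w in M. norm (S w) \<le> norm ((S w)\<^sup>2 + 1)"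
    proof (rule AE_I2)
      fix w
      have "\<bar>S w\<bar> \<le> (S w)\<^sup>2 + 1"
      proof (cases "\<bar>S w\<bar> \<le> 1")
        case True then show ?thesis by (smt (verit) zero_le_power2)
      next
        case False
        then have "\<bar>S w\<bar> * 1 \<le> \<bar>S w\<bar> * \<bar>S w\<bar>" by (intro mult_left_mono) auto
        then show ?thesis by (simp add: power2_eq_square abs_mult_self_eq)
      qed
      then show "norm (S w) \<le> norm ((S w)\<^sup>2 + 1)" by simp
    qed
  qed
  have Dbd: "\<And>n. AE w in M. \<bar>D n w\<bar> \<le> 1"
  proof -
    fix n show "AE w in M. \<bar>D n w\<bar> \<le> 1" using Dprops[of n] by eventually_elim auto
  qed
  have Dint: "\<And>n. integrable M (D n)"
    using Dbd by (intro integrable_const_bound[where B=1]) auto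
  have SDint: "\<And>n. integrable M (\<lambda>w. S w * D n w)"
    using integrable_bounded_mult[OF Sint Dm Dbd] by (simp add: mult.commute)
  have bound_n: "\<And>n. \<bar>prob_space.expectation M (cal n) $ k - (B *v \<mu>b) $ k\<bar> \<le> (\<integral>w. S w * D n w \<partial>M) / c\<^sup>2"
  proof -
    fix n
    have "prob_space.expectation M (cal n) $ k - (B *v \<mu>b) $ k
        = (\<integral>w. (\<Sum>i\<in>{1..N}. T n i w) - (\<Sum>i\<in>{1..N}. R i w) \<partial>M)"
      unfolding calk sumR[symmetric] by (rule Bochner_Integration.integral_diff[OF Tint sRint, symmetric])
    also have "\<bar>\<dots>\<bar> \<le> (\<integral>w. \<bar>(\<Sum>i\<in>{1..N}. T n i w) - (\<Sum>i\<in>{1..N}. R i w)\<bar> \<partial>M)"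
      by (rule integral_abs_bound)
    also have "\<dots> \<le> (\<integral>w. S w * D n w / c\<^sup>2 \<partial>M)"
      by (rule integral_mono_AE) (use Tint sRint SDint pw in auto)
    also have "\<dots> = (\<integral>w. S w * D n w \<partial>M) / c\<^sup>2" by simp
    finally show "\<bar>prob_space.expectation M (cal n) $ k - (B *v \<mu>b) $ k\<bar> \<le> (\<integral>w. S w * D n w \<partial>M) / c\<^sup>2" .
  qed
  have Dlim: "(\<lambda>n. \<integral>w. D n w \<partial>M) \<longlonglongrightarrow> 0"
    using consist unfolding D_def \<pi>_def by simp
  define C where "C = (\<integral>w. (S w)\<^sup>2 \<partial>M)"
  have C0: "0 \<le> C" unfolding C_def by (rule integral_nonneg_AE) simp
  have SDnn: "\<And>n. 0 \<le> (\<integral>w. S w * D n w \<partial>M)"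
  proof -
    fix n
    show "0 \<le> (\<integral>w. S w * D n w \<partial>M)"
    proof (rule integral_nonneg_AE)
      show "AE w in M. 0 \<le> S w * D n w"
        using good_ae[of n] Dprops[of n] AE_space
      proof eventually_elim
        case (elim w)
        have "0 \<le> S w" unfolding S_def
        proof (rule sum_nonneg)
          fix i assume "i \<in> {i\<in>{1..N}. A i w = 1}"
          then have i: "i \<in> {1..N}" and a: "A i w = 1" by auto
          have "E i w = 1" using AE1[OF i elim(3) a] .
          then have "0 \<le> q i w" using bspec[OF elim(1) i] by auto
          then show "0 \<le> q i w * norm (\<Delta> i w)" by simp
        qed
        then show ?case using elim(2) by simp
      qed
    qed
  qed
  have SDup: "\<And>n t. t > 0 \<Longrightarrow> (\<integral>w. S w * D n w \<partial>M) \<le> t * C + (\<integral>w. D n w \<partial>M) / t"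
  proof -
    fix n and t :: real assume t: "t > 0"
    have "(\<integral>w. S w * D n w \<partial>M) \<le> (\<integral>w. t * (S w)\<^sup>2 + D n w / t \<partial>M)"
    proof (rule integral_mono_AE)
      show "integrable M (\<lambda>w. t * (S w)\<^sup>2 + D n w / t)" using S2int Dint[of n] by simp
      show "AE w in M. S w * D n w \<le> t * (S w)\<^sup>2 + D n w / t"
        using Dprops[of n] by eventually_elim (rule amgm_bound[OF t], auto)
    qed (rule SDint)
    also have "\<dots> = t * C + (\<integral>w. D n w \<partial>M) / t"
      unfolding C_def using S2int Dint[of n] by (simp add: Bochner_Integration.integral_add)
    finally show "(\<integral>w. S w * D n w \<partial>M) \<le> t * C + (\<integral>w. D n w \<partial>M) / t" .
  qed
  have SDlim: "(\<lambda>n. \<integral>w. S w * D n w \<partial>M) \<longlonglongrightarrow> 0"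
  proof (rule LIMSEQ_I)
    fix r :: real assume r: "0 < r"
    define t where "t = r / (2 * (C + 1))"
    have t: "t > 0" unfolding t_def using r C0 by simp
    have "0 < r * t / 2" using r t by simp
    from order_tendstoD(2)[OF Dlim this]
    obtain n0 where n0: "\<And>n. n \<ge> n0 \<Longrightarrow> (\<integral>w. D n w \<partial>M) < r * t / 2"
      unfolding eventually_sequentially by blast
    have tC: "t * C \<le> r / 2"
    proof -
      have "t * C = r / 2 * (C / (C + 1))" unfolding t_def using C0 by (simp add: field_simps)
      also have "\<dots> \<le> r / 2 * 1" using r C0 by (intro mult_left_mono) auto
      finally show ?thesis by simp
    qed
    show "\<exists>no. \<forall>n\<ge>no. norm ((\<integral>w. S w * D n w \<partial>M) - 0) < r"
    proof (intro exI allI impI)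
      fix n assume n: "n \<ge> n0"
      have "(\<integral>w. D n w \<partial>M) / t < (r * t / 2) / t" by (rule divide_strict_right_mono[OF n0[OF n] t])
      also have "\<dots> = r / 2" using t by simp
      finally have "(\<integral>w. S w * D n w \<partial>M) < r" using SDup[OF t, of n] tC by linarith
      then show "norm ((\<integral>w. S w * D n w \<partial>M) - 0) < r" using SDnn[of n] by simp
    qed
  qed
  have glim: "(\<lambda>n. (\<integral>w. S w * D n w \<partial>M) / c\<^sup>2) \<longlonglongrightarrow> 0"
    using tendsto_divide[OF SDlim tendsto_const, of "c\<^sup>2"] c_pos by simp
  show ?thesis
  proof (rule Lim_null_comparison[OF _ glim])
    show "\<forall>\<^sub>F n in sequentially. norm (prob_space.expectation M (cal_est N A q (pihat n) \<Delta>) $ k - (B *v \<mu>b) $ k)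
        \<le> (\<integral>w. S w * D n w \<partial>M) / c\<^sup>2"
      using bound_n unfolding cal_def by (intro always_eventually allI) simp
  qed
qed

lemma second:
  assumes N1: "N \<ge> 1"
    and B: "\<forall>i\<in>{1..N}. AE w in M. vec_cond_exp M (gen_sigma M (Z i) SZ) (\<Delta> i) w = B *v b (Z i w)"
  shows "((1 / real N) *\<^sub>R (\<Sum>i\<in>{1..N}. prob_space.expectation M (\<Delta> i))) $ k = (B *v \<mu>b) $ k"
proof -
  interpret prob_space M by (rule P)
  have blB: "bounded_linear (\<lambda>v. (B *v v) $ k)"
    by (rule bounded_linear_compose[OF bounded_linear_vec_nth matrix_vector_mul_bounded_linear])
  have each: "expectation (\<Delta> i) $ k = (B *v \<mu>b) $ k" if i: "i \<in> {1..N}" for i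
  proof -
    note [measurable] = comp_meas[OF i]
    define F1 where "F1 = gen_sigma M (Z i) SZ"
    have spF1: "space F1 = space M" by (simp add: F1_def gen_sigma_def)
    have F1M: "sets F1 \<subseteq> sets M" unfolding F1_def gen_sigma_def by (rule sets_image_in_sets) auto
    interpret F1S: finite_measure_subalgebra M F1
      by unfold_locales (auto simp: subalgebra_def F1M spF1)
    have Yint: "integrable M (\<lambda>w. \<Delta> i w $ k)"
      by (rule integrable_bounded_linear[OF bounded_linear_vec_nth \<Delta>_int[OF i]])
    have bint: "integrable M (\<lambda>w. b (Z i w))" using b_mean[OF i] by (rule integrable.intros)
    have "expectation (\<Delta> i) $ k = (\<integral>w. \<Delta> i w $ k \<partial>M)"
      using integral_bounded_linear[OF bounded_linear_vec_nth \<Delta>_int[OF i], of k] by simp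
    also have "\<dots> = (\<integral>w. real_cond_exp M F1 (\<lambda>w. \<Delta> i w $ k) w \<partial>M)"
      by (rule F1S.real_cond_exp_int(2)[OF Yint, symmetric])
    also have "\<dots> = (\<integral>w. (B *v b (Z i w)) $ k \<partial>M)"
    proof (rule integral_cong_AE)
      show "AE w in M. real_cond_exp M F1 (\<lambda>w. \<Delta> i w $ k) w = (B *v b (Z i w)) $ k"
        using bspec[OF B i, folded F1_def]
      proof eventually_elim
        case (elim w)
        then have "vec_cond_exp M F1 (\<Delta> i) w $ k = (B *v b (Z i w)) $ k" by simp
        then show ?case by (simp add: vec_cond_exp_def)
      qed
    qed (use b_meas in measurable)
    also have "\<dots> = (B *v \<mu>b) $ k"
      using integral_bounded_linear[OF blB bint] has_bochner_integral_integral_eq[OF b_mean[OF i]] by simp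
    finally show ?thesis .
  qed
  have "((1 / real N) *\<^sub>R (\<Sum>i\<in>{1..N}. expectation (\<Delta> i))) $ k = (1 / real N) * (\<Sum>i\<in>{1..N}. expectation (\<Delta> i) $ k)"
    by simp
  also have "\<dots> = (1 / real N) * (\<Sum>i\<in>{1..N}. (B *v \<mu>b) $ k)" using each by simp
  also have "\<dots> = (B *v \<mu>b) $ k" using N1 by simp
  finally show ?thesis .
qed

lemma final:
  shows "(\<lambda>n. prob_space.expectation M (cal_est N A q (pihat n) \<Delta>)
              - (1 / real N) *\<^sub>R (\<Sum>i\<in>{1..N}. prob_space.expectation M (\<Delta> i))) \<longlonglongrightarrow> 0"
proof (cases "N = 0")
  case True
  have "\<And>n. cal_est N A q (pihat n) \<Delta> = (\<lambda>w. 0)" by (rule ext) (simp add: cal_est_def True)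
  then show ?thesis using True by simp
next
  case False
  then have N1: "N \<ge> 1" by simp
  obtain B :: "real^'q^'m" where B: "\<forall>i\<in>{1..N}. AE w in M. vec_cond_exp M (gen_sigma M (Z i) SZ) (\<Delta> i) w = B *v b (Z i w)"
    using moment_suff by blast
  show ?thesis
  proof (rule vec_tendstoI)
    fix k
    have "(\<lambda>n. prob_space.expectation M (cal_est N A q (pihat n) \<Delta>) $ k - (B *v \<mu>b) $ k) \<longlonglongrightarrow> 0"
      by (rule main_comp[OF N1 B])
    then show "((\<lambda>n. (prob_space.expectation M (cal_est N A q (pihat n) \<Delta>)
              - (1 / real N) *\<^sub>R (\<Sum>i\<in>{1..N}. prob_space.expectation M (\<Delta> i))) $ k) \<longlongrightarrow> 0 $ k) sequentially"
      using second[OF N1 B, of k] by simp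
  qed
qed

end

theorem mainTheorem4:
  fixes M :: "'a measure" and SZ :: "'z measure" and SX :: "'x measure"
    and N :: nat
    and Z :: "nat \<Rightarrow> 'a \<Rightarrow> 'z" and X :: "nat \<Rightarrow> 'a \<Rightarrow> 'x"
    and E :: "nat \<Rightarrow> 'a \<Rightarrow> real" and A :: "nat \<Rightarrow> 'a \<Rightarrow> real"
    and \<Delta> :: "nat \<Rightarrow> 'a \<Rightarrow> real^'m"
    and b :: "'z \<Rightarrow> real^'q" and \<mu>b :: "real^'q"
    and q :: "nat \<Rightarrow> 'a \<Rightarrow> real"
    and pihat :: "nat \<Rightarrow> nat \<Rightarrow> 'a \<Rightarrow> real"
    and c :: real
  assumes P: "prob_space M"
    and indep: "prob_space.indep_vars M (\<lambda>_. SZ \<Otimes>\<^sub>M borel \<Otimes>\<^sub>M SX \<Otimes>\<^sub>M borel \<Otimes>\<^sub>M borel)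
                  (\<lambda>i w. (Z i w, E i w, X i w, A i w, \<Delta> i w)) {1..N}"
    and E01: "\<And>i w. i \<in> {1..N} \<Longrightarrow> w \<in> space M \<Longrightarrow> E i w \<in> {0, 1}"
    and A01: "\<And>i w. i \<in> {1..N} \<Longrightarrow> w \<in> space M \<Longrightarrow> A i w \<in> {0, 1}"
    and AE0: "\<And>i w. i \<in> {1..N} \<Longrightarrow> w \<in> space M \<Longrightarrow> E i w = 0 \<Longrightarrow> A i w = 0"
    and \<Delta>_int: "\<And>i. i \<in> {1..N} \<Longrightarrow> integrable M (\<Delta> i)"
    and b_meas: "b \<in> borel_measurable SZ"
    and b_mean: "\<And>i. i \<in> {1..N} \<Longrightarrow> has_bochner_integral M (\<lambda>w. b (Z i w)) \<mu>b"
    and q_meas: "\<And>i. i \<in> {1..N} \<Longrightarrow>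
        q i \<in> borel_measurable (gen_sigma M (\<lambda>w. \<lambda>j\<in>{1..N}. (E j w, Z j w))
                                       (PiM {1..N} (\<lambda>_. borel \<Otimes>\<^sub>M SZ)))"
    and q_nonneg: "AE w in M. \<forall>i\<in>{1..N}. E i w = 1 \<longrightarrow> q i w \<ge> 0"
    and q_sum: "AE w in M. (\<Sum>i\<in>{i\<in>{1..N}. E i w = 1}. q i w) = 1"
    and q_cal: "AE w in M. (\<Sum>i\<in>{i\<in>{1..N}. E i w = 1}. q i w *\<^sub>R b (Z i w)) = \<mu>b"
    and pihat_meas: "\<And>n i. i \<in> {1..N} \<Longrightarrow> pihat n i \<in> borel_measurable M"
    and part_ign: "\<And>i. i \<in> {1..N} \<Longrightarrow> AE w in M. E i w = 1 \<and> A i w = 1 \<longrightarrow>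
        vec_cond_exp M (gen_sigma M (\<lambda>v. (Z i v, X i v, E i v, A i v))
                          (SZ \<Otimes>\<^sub>M SX \<Otimes>\<^sub>M borel \<Otimes>\<^sub>M borel)) (\<Delta> i) w
      = vec_cond_exp M (gen_sigma M (\<lambda>v. (Z i v, X i v, E i v))
                          (SZ \<Otimes>\<^sub>M SX \<Otimes>\<^sub>M borel)) (\<Delta> i) w"
    and enr_ign: "\<And>i. i \<in> {1..N} \<Longrightarrow> AE w in M. E i w = 1 \<longrightarrow>
        vec_cond_exp M (gen_sigma M (\<lambda>v. (Z i v, E i v)) (SZ \<Otimes>\<^sub>M borel)) (\<Delta> i) w
      = vec_cond_exp M (gen_sigma M (Z i) SZ) (\<Delta> i) w"
    and moment_suff: "\<exists>B :: real^'q^'m. \<forall>i\<in>{1..N}. AE w in M.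
        vec_cond_exp M (gen_sigma M (Z i) SZ) (\<Delta> i) w = B *v b (Z i w)"
    and c_pos: "c > 0"
    and overlap: "\<And>i. i \<in> {1..N} \<Longrightarrow> AE w in M. E i w = 1 \<longrightarrow> pi_part M SZ SX Z X E A i w \<ge> c"
    and pihat_bds: "\<And>n i. i \<in> {1..N} \<Longrightarrow> AE w in M. E i w = 1 \<longrightarrow> c \<le> pihat n i w \<and> pihat n i w \<le> 1"
    and consist: "(\<lambda>n. prob_space.expectation M (\<lambda>w.
        Max (insert 0 ((\<lambda>i. \<bar>pihat n i w - pi_part M SZ SX Z X E A i w\<bar>) ` {i\<in>{1..N}. E i w = 1}))))
        \<longlonglongrightarrow> 0"
    and bdd_moment: "integrable M (\<lambda>w. (\<Sum>i\<in>{i\<in>{1..N}. A i w = 1}. q i w * norm (\<Delta> i w))\<^sup>2)"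
  shows "(\<lambda>n. prob_space.expectation M (cal_est N A q (pihat n) \<Delta>)
              - (1 / real N) *\<^sub>R (\<Sum>i\<in>{1..N}. prob_space.expectation M (\<Delta> i))) \<longlonglongrightarrow> 0"
  by (rule final[OF assms])

end
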